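(* Every $4$-long affine liner is Playfair and regular.
   Context: A liner is a set $X$ of points with a family of subsets called lines such that any two distinct points lie in a unique line and every line contains at least two points. For distinct $x,y$, $\overline{xy}$ is the line through them and $\overline{xx}:=\{x\}$. A set is flat if it contains $\overline{xy}$ for all its distinct points; $\overline A$ is the smallest flat containing $A$; the rank $\|A\|$ is the smallest cardinality of $B\subseteq X$ with $A\subseteq\overline B$; a plane is a flat of rank 3. For $A\subseteq X$ and $y\in X$ put $\overline{Ay}=\bigcup_{a\in A}\overline{ay}$. $X$ is $4$-long if every line has at least $4$ points. $X$ is affine if for all $o,x,y\in X$ and $p\in\overline{xy}\setminus\overline{ox}$ there exists $u\in\overline{oy}$ such that for every $v\in\overline{oy}$: $u=v$ iff $\overline{vp}\cap\overline{ox}=\varnothing$. $X$ is Playfair if for every plane $P$, line $L\subseteq P$ and point $x\in P\setminus L$ there is a unique line $\Lambda$ with $x\in\Lambda\subseteq P\setminus L$. $X$ is regular if for every flat $A\subseteq X$ and points $a\in A$, $b\in X\setminus A$, we have $\overline{A\cup\{b\}}=\bigcup_{y\in\overline{ab}}\overline{Ay}$. *)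

theory Defs
  imports Main
begin

definition liner :: "'a set \<Rightarrow> 'a set set \<Rightarrow> bool" where
  "liner X \<L> \<longleftrightarrow>
     (\<forall>L\<in>\<L>. L \<subseteq> X \<and> (\<exists>a b. a \<noteq> b \<and> a \<in> L \<and> b \<in> L)) \<and>
     (\<forall>x\<in>X. \<forall>y\<in>X. x \<noteq> y \<longrightarrow> (\<exists>!L. L \<in> \<L> \<and> x \<in> L \<and> y \<in> L))"

definition line :: "'a set set \<Rightarrow> 'a \<Rightarrow> 'a \<Rightarrow> 'a set" where
  "line \<L> x y = (if x = y then {x} else (THE L. L \<in> \<L> \<and> x \<in> L \<and> y \<in> L))"

definition flat :: "'a set \<Rightarrow> 'a set set \<Rightarrow> 'a set \<Rightarrow> bool" where
  "flat X \<L> A \<longleftrightarrow> A \<subseteq> X \<and> (\<forall>x\<in>A. \<forall>y\<in>A. x \<noteq> y \<longrightarrow> line \<L> x y \<subseteq> A)"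

definition hull :: "'a set \<Rightarrow> 'a set set \<Rightarrow> 'a set \<Rightarrow> 'a set" where
  "hull X \<L> A = \<Inter> {F. flat X \<L> F \<and> A \<subseteq> F}"

definition has_rank :: "'a set \<Rightarrow> 'a set set \<Rightarrow> 'a set \<Rightarrow> nat \<Rightarrow> bool" where
  "has_rank X \<L> A n \<longleftrightarrow>
     (\<exists>B. B \<subseteq> X \<and> finite B \<and> card B = n \<and> A \<subseteq> hull X \<L> B) \<and>
     (\<forall>B. B \<subseteq> X \<and> finite B \<and> A \<subseteq> hull X \<L> B \<longrightarrow> n \<le> card B)"

definition plane :: "'a set \<Rightarrow> 'a set set \<Rightarrow> 'a set \<Rightarrow> bool" where
  "plane X \<L> P \<longleftrightarrow> flat X \<L> P \<and> has_rank X \<L> P 3"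

definition cone :: "'a set set \<Rightarrow> 'a set \<Rightarrow> 'a \<Rightarrow> 'a set" where
  "cone \<L> A y = (\<Union>a\<in>A. line \<L> a y)"

definition four_long :: "'a set set \<Rightarrow> bool" where
  "four_long \<L> \<longleftrightarrow> (\<forall>L\<in>\<L>. infinite L \<or> 4 \<le> card L)"

definition affine_liner :: "'a set \<Rightarrow> 'a set set \<Rightarrow> bool" where
  "affine_liner X \<L> \<longleftrightarrow>
     (\<forall>z\<in>X. \<forall>x\<in>X. \<forall>y\<in>X. \<forall>p \<in> line \<L> x y - line \<L> z x.
        \<exists>u\<in>line \<L> z y. \<forall>v\<in>line \<L> z y.
          (u = v \<longleftrightarrow> line \<L> v p \<inter> line \<L> z x = {}))"

definition playfair :: "'a set \<Rightarrow> 'a set set \<Rightarrow> bool" where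
  "playfair X \<L> \<longleftrightarrow>
     (\<forall>P L x. plane X \<L> P \<and> L \<in> \<L> \<and> L \<subseteq> P \<and> x \<in> P - L \<longrightarrow>
        (\<exists>!\<Lambda>. \<Lambda> \<in> \<L> \<and> x \<in> \<Lambda> \<and> \<Lambda> \<subseteq> P - L))"

definition regular :: "'a set \<Rightarrow> 'a set set \<Rightarrow> bool" where
  "regular X \<L> \<longleftrightarrow>
     (\<forall>A a b. flat X \<L> A \<and> a \<in> A \<and> b \<in> X - A \<longrightarrow>
        hull X \<L> (A \<union> {b}) = (\<Union>y\<in>line \<L> a b. cone \<L> A y))"

end

theory Submission
  imports Defs
begin


locale AL =
  fixes X :: "'a set" and LL :: "'a set set"
  assumes liner: "liner X LL" and fl: "four_long LL" and aff: "affine_liner X LL"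
begin

abbreviation ln where "ln x y \<equiv> line LL x y"

lemma liner1: "\<forall>L\<in>LL. L \<subseteq> X \<and> (\<exists>a b. a \<noteq> b \<and> a \<in> L \<and> b \<in> L)"
  using liner unfolding liner_def by (rule conjunct1)

lemma liner2: "\<forall>x\<in>X. \<forall>y\<in>X. x \<noteq> y \<longrightarrow> (\<exists>!L. L \<in> LL \<and> x \<in> L \<and> y \<in> L)"
  using liner unfolding liner_def by (rule conjunct2)

lemma lineX: "L \<in> LL \<Longrightarrow> L \<subseteq> X"
  using liner1 by simp

lemma uniq: "x \<in> X \<Longrightarrow> y \<in> X \<Longrightarrow> x \<noteq> y \<Longrightarrow> \<exists>!L. L \<in> LL \<and> x \<in> L \<and> y \<in> L"
  using liner2 by simp

lemma ln_props: assumes "x \<in> X" "y \<in> X" "x \<noteq> y"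
  shows "ln x y \<in> LL \<and> x \<in> ln x y \<and> y \<in> ln x y"
proof -
  have "ln x y = (THE L. L \<in> LL \<and> x \<in> L \<and> y \<in> L)" using assms(3) by (simp add: line_def)
  then show ?thesis using theI'[OF uniq[OF assms]] by simp
qed

lemma ln_self[simp]: "ln x x = {x}" by (simp add: line_def)

lemma ln_L: "x \<in> X \<Longrightarrow> y \<in> X \<Longrightarrow> ln x y \<in> LL \<or> x = y"
  using ln_props by blast

lemma ln_left[simp]: "x \<in> X \<Longrightarrow> y \<in> X \<Longrightarrow> x \<in> ln x y"
  using ln_props by (cases "x = y") auto

lemma ln_right[simp]: "x \<in> X \<Longrightarrow> y \<in> X \<Longrightarrow> y \<in> ln x y"
  using ln_props by (cases "x = y") auto

lemma ln_eq: assumes "L \<in> LL" "x \<in> L" "y \<in> L" "x \<noteq> y" shows "ln x y = L"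
proof -
  have X: "x \<in> X" "y \<in> X" using assms lineX by auto
  have "ln x y = (THE L. L \<in> LL \<and> x \<in> L \<and> y \<in> L)" using assms(4) by (simp add: line_def)
  also have "\<dots> = L" by (rule the1_equality[OF uniq[OF X assms(4)]]) (use assms in simp)
  finally show ?thesis .
qed

lemma ln_sym: "ln x y = ln y x"
proof (cases "x = y")
  case False
  have "(\<lambda>L. L \<in> LL \<and> x \<in> L \<and> y \<in> L) = (\<lambda>L. L \<in> LL \<and> y \<in> L \<and> x \<in> L)" by auto
  then show ?thesis using False unfolding line_def by simp
qed simp

lemma lnX: "x \<in> X \<Longrightarrow> y \<in> X \<Longrightarrow> ln x y \<subseteq> X"
  using ln_props lineX by (cases "x = y") auto

lemma ln_eq2: assumes "x \<in> X" "y \<in> X" "p \<in> ln x y" "q \<in> ln x y" "p \<noteq> q"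
  shows "ln p q = ln x y"
proof (cases "x = y")
  case True then show ?thesis using assms by simp
next
  case False
  then have "ln x y \<in> LL" using ln_props assms by blast
  then show ?thesis using ln_eq assms by blast
qed

lemma ln_uniq: assumes "a \<in> X" "b \<in> X" "c \<in> X" "d \<in> X" "p \<in> ln a b" "q \<in> ln a b"
  "p \<in> ln c d" "q \<in> ln c d" "p \<noteq> q" shows "ln a b = ln c d"
  using ln_eq2[OF assms(1,2,5,6,9)] ln_eq2[OF assms(3,4,7,8,9)] by simp

lemma card3: "card {a,b,c::'a} \<le> 3"
  by (simp add: card_insert_if)

lemma four: assumes "L \<in> LL" shows "\<exists>z\<in>L. z \<noteq> a \<and> z \<noteq> b \<and> z \<noteq> c"
proof (rule ccontr)
  assume "\<not> ?thesis"
  then have sub: "L \<subseteq> {a,b,c}" by blast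
  have fin: "finite L" using sub finite_subset by blast
  have "card L \<le> card {a,b,c}" using card_mono[OF _ sub] by simp
  also have "\<dots> \<le> 3" by (rule card3)
  finally have "card L \<le> 3" .
  moreover have "infinite L \<or> 4 \<le> card L" using fl assms unfolding four_long_def by blast
  ultimately show False using fin by simp
qed

lemma four_ln: assumes "x \<in> X" "y \<in> X" "x \<noteq> y" shows "\<exists>z\<in>ln x y. z \<noteq> a \<and> z \<noteq> b \<and> z \<noteq> c"
  using four ln_props[OF assms] by blast

lemma AX0: "\<forall>z\<in>X. \<forall>x\<in>X. \<forall>y\<in>X. \<forall>p\<in>line LL x y - line LL z x. \<exists>u\<in>line LL z y. \<forall>v\<in>line LL z y. (u = v) = (line LL v p \<inter> line LL z x = {})"
  using aff unfolding affine_liner_def .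

lemma AX1: assumes "c \<in> X" "x \<in> X" "y \<in> X" "p \<in> ln x y" "p \<notin> ln c x"
  shows "\<exists>u\<in>ln c y. \<forall>v\<in>ln c y. (u = v) = (ln v p \<inter> ln c x = {})"
  using AX0[rule_format, OF assms(1,2,3) DiffI[OF assms(4,5)]] .

lemma AX: assumes "c \<in> X" "x \<in> X" "y \<in> X" "p \<in> ln x y" "p \<notin> ln c x"
  shows "\<exists>u\<in>ln c y. ln u p \<inter> ln c x = {} \<and> (\<forall>v\<in>ln c y. v \<noteq> u \<longrightarrow> ln v p \<inter> ln c x \<noteq> {})"
proof -
  obtain u where u: "u \<in> ln c y" "\<And>v. v \<in> ln c y \<Longrightarrow> (u = v) = (ln v p \<inter> ln c x = {})"
    using AX1[OF assms] by (elim bexE) (rule that, assumption, blast)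
  show ?thesis
  proof (rule bexI[OF _ u(1)], intro conjI ballI impI)
    show "ln u p \<inter> ln c x = {}" using u(2)[OF u(1)] by simp
    fix v assume "v \<in> ln c y" "v \<noteq> u"
    then show "ln v p \<inter> ln c x \<noteq> {}" using u(2)[of v] by simp
  qed
qed

lemma ln_LL: "x \<in> X \<Longrightarrow> y \<in> X \<Longrightarrow> x \<noteq> y \<Longrightarrow> ln x y \<in> LL"
  using ln_props by blast

lemma ln_memX: "x \<in> X \<Longrightarrow> y \<in> X \<Longrightarrow> a \<in> ln x y \<Longrightarrow> a \<in> X"
  using lnX by blast

lemma ln_eq3: assumes "x \<in> X" "y \<in> X" "a \<in> ln x y" "a \<noteq> x" shows "ln x a = ln x y"
  by (rule ln_eq2[OF assms(1,2) ln_left[OF assms(1,2)] assms(3) not_sym[OF assms(4)]])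

lemma ln_subL: assumes "L \<in> LL" "a \<in> L" "b \<in> L" shows "ln a b \<subseteq> L"
proof (cases "a = b")
  case True then show ?thesis using assms by simp
next
  case False then show ?thesis using ln_eq[OF assms False] by simp
qed

lemma other_pt: assumes "L \<in> LL" shows "\<exists>b\<in>L. b \<noteq> a"
proof -
  obtain a' b' where "a' \<noteq> b'" "a' \<in> L" "b' \<in> L" using liner1 assms by blast
  then show ?thesis by (cases "a' = a") auto
qed

lemma lines_eq: assumes "L \<in> LL" "M \<in> LL" "a \<in> L" "a \<in> M" "b \<in> L" "b \<in> M" "a \<noteq> b"
  shows "L = M"
  using ln_eq[OF assms(1,3,5,7)] ln_eq[OF assms(2,4,6,7)] by simp

lemma memX: "L \<in> LL \<Longrightarrow> a \<in> L \<Longrightarrow> a \<in> X"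
  using lineX by blast

end


context AL begin

definition ps :: "'a \<Rightarrow> 'a set \<Rightarrow> 'a set \<Rightarrow> bool" where
  "ps e L M \<longleftrightarrow> L \<in> LL \<and> M \<in> LL \<and> L \<noteq> M \<and> e \<in> L \<and> e \<in> M"

definition pl :: "'a set \<Rightarrow> 'a set \<Rightarrow> 'a set" where
  "pl L M = {p. \<exists>w\<in>L. \<exists>v\<in>M. p \<in> ln w v}"

lemma psD: assumes "ps e L M" shows "L \<in> LL" "M \<in> LL" "L \<noteq> M" "e \<in> L" "e \<in> M" "e \<in> X"
  using assms memX unfolding ps_def by auto

lemma ps_sym: "ps e L M \<Longrightarrow> ps e M L" unfolding ps_def by auto

lemma meetLM: assumes "ps e L M" "a \<in> L" "a \<in> M" shows "a = e"
proof (rule ccontr)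
  assume "a \<noteq> e"
  then have "L = M" using lines_eq[of L M a e] psD[OF assms(1)] assms(2,3) by simp
  then show False using psD(3)[OF assms(1)] by simp
qed

lemma pl_sym: "pl L M = pl M L" unfolding pl_def using ln_sym by blast

lemma plI: "w \<in> L \<Longrightarrow> v \<in> M \<Longrightarrow> p \<in> ln w v \<Longrightarrow> p \<in> pl L M" unfolding pl_def by blast

lemma pl_L: assumes "ps e L M" shows "L \<subseteq> pl L M"
proof
  fix w assume w: "w \<in> L"
  have "w \<in> X" using memX[OF psD(1)[OF assms] w] .
  then have "w \<in> ln w e" using ln_left psD(6)[OF assms] by blast
  then show "w \<in> pl L M" using plI[OF w psD(5)[OF assms]] by simp
qed

lemma pl_M: assumes "ps e L M" shows "M \<subseteq> pl L M"
  using pl_L[OF ps_sym[OF assms]] pl_sym by simp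

lemma pl_X: assumes "ps e L M" shows "pl L M \<subseteq> X"
proof
  fix p assume "p \<in> pl L M"
  then obtain w v where "w \<in> L" "v \<in> M" "p \<in> ln w v" unfolding pl_def by blast
  then show "p \<in> X" using ln_memX memX psD[OF assms] by blast
qed

lemma legit: assumes ps: "ps e L M" and p: "p \<in> pl L M" "p \<notin> L" "p \<notin> M"
  obtains w v where "w \<in> L" "v \<in> M" "w \<noteq> e" "v \<noteq> e" "p \<in> ln w v" "w \<noteq> v" "p \<noteq> w" "p \<noteq> v"
proof -
  obtain w v where wv: "w \<in> L" "v \<in> M" "p \<in> ln w v" using p(1) unfolding pl_def by blast
  have wnv: "w \<noteq> v"
  proof
    assume "w = v" then have "p = w" using wv(3) by simp
    then show False using p(2) wv(1) by simp
  qed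
  have we: "w \<noteq> e"
  proof
    assume "w = e"
    then have "ln w v = M" using ln_eq[OF psD(2)[OF ps] _ wv(2) wnv] psD(5)[OF ps] by simp
    then show False using wv(3) p(3) by simp
  qed
  have ve: "v \<noteq> e"
  proof
    assume "v = e"
    then have "ln w v = L" using ln_eq[OF psD(1)[OF ps] wv(1) _ wnv] psD(4)[OF ps] by simp
    then show False using wv(3) p(2) by simp
  qed
  have "p \<noteq> w" using p(2) wv(1) by blast
  moreover have "p \<noteq> v" using p(3) wv(2) by blast
  ultimately show thesis using that[OF wv(1,2) we ve wv(3) wnv] by blast
qed

lemma P: assumes ps: "ps e L M" and p: "p \<in> pl L M" "p \<notin> L" "p \<notin> M" and s: "s \<in> ln e p"
  shows "s \<in> pl L M"
proof -
  have pX: "p \<in> X" using p(1) pl_X[OF ps] by blast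
  have eX: "e \<in> X" using psD(6)[OF ps] .
  have pe: "p \<noteq> e" using p(2) psD(4)[OF ps] by blast
  show ?thesis
  proof (cases "s = e \<or> s = p")
    case True then show ?thesis using p(1) pl_L[OF ps] psD(4)[OF ps] by blast
  next
    case False
    then have se: "s \<noteq> e" and sp: "s \<noteq> p" by auto
    have sX: "s \<in> X" using ln_memX[OF eX pX s] .
    have lnes: "ln e s = ln e p" using ln_eq3[OF eX pX s se] .
    have sL: "s \<notin> L"
    proof
      assume "s \<in> L"
      then have "ln e s = L" using ln_eq[OF psD(1)[OF ps] psD(4)[OF ps] _ not_sym[OF se]] by simp
      then have "p \<in> L" using lnes ln_right[OF eX pX] by simp
      then show False using p(2) by simp
    qed
    have sM: "s \<notin> M"
    proof
      assume "s \<in> M"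
      then have "ln e s = M" using ln_eq[OF psD(2)[OF ps] psD(5)[OF ps] _ not_sym[OF se]] by simp
      then have "p \<in> M" using lnes ln_right[OF eX pX] by simp
      then show False using p(3) by simp
    qed
    obtain w v where wv: "w \<in> L" "v \<in> M" "w \<noteq> e" "v \<noteq> e" "p \<in> ln w v" "w \<noteq> v" "p \<noteq> w" "p \<noteq> v"
      using legit[OF ps p] by blast
    have wX: "w \<in> X" using memX[OF psD(1)[OF ps] wv(1)] .
    have vX: "v \<in> X" using memX[OF psD(2)[OF ps] wv(2)] .
    define K where "K = ln w v"
    have KL: "K \<in> LL" using ln_LL[OF wX vX wv(6)] K_def by simp
    have pK: "p \<in> K" using wv(5) K_def by simp
    have wK: "w \<in> K" using ln_left[OF wX vX] K_def by simp
    have vK: "v \<in> K" using ln_right[OF wX vX] K_def by simp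
    have lnwp: "ln w p = K" using ln_eq[OF KL wK pK not_sym[OF wv(7)]] .
    have lnvp: "ln v p = K" using ln_eq[OF KL vK pK not_sym[OF wv(8)]] .
    have lnwe: "ln w e = L" using ln_eq[OF psD(1)[OF ps] wv(1) psD(4)[OF ps] wv(3)] .
    have lnve: "ln v e = M" using ln_eq[OF psD(2)[OF ps] wv(2) psD(5)[OF ps] wv(4)] .
    have lnep: "ln e p \<in> LL" using ln_LL[OF eX pX not_sym[OF pe]] .
    have eK: "e \<notin> K"
    proof
      assume "e \<in> K"
      then have "K = L" using lines_eq[OF KL psD(1)[OF ps] wK wv(1) _ psD(4)[OF ps] wv(3)] by simp
      then have "v \<in> L" using vK by simp
      then show False using meetLM[OF ps _ wv(2)] wv(4) by blast
    qed
    have sK: "s \<notin> K"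
    proof
      assume "s \<in> K"
      then have "K = ln e p" using lines_eq[OF KL lnep _ s pK ln_right[OF eX pX] sp] by simp
      then show False using eK ln_left[OF eX pX] by simp
    qed
    have sLw: "s \<notin> ln w e" using sL lnwe by simp
    have sMv: "s \<notin> ln v e" using sM lnve by simp
    obtain uL where uL: "\<forall>h\<in>ln w p. h \<noteq> uL \<longrightarrow> ln h s \<inter> ln w e \<noteq> {}"
      using AX[OF wX eX pX s sLw] by blast
    obtain uM where uM: "\<forall>h\<in>ln v p. h \<noteq> uM \<longrightarrow> ln h s \<inter> ln v e \<noteq> {}"
      using AX[OF vX eX pX s sMv] by blast
    obtain h where h: "h \<in> K" "h \<noteq> uL" "h \<noteq> uM" "h \<noteq> p" using four[OF KL] by blast
    have hX: "h \<in> X" using memX[OF KL h(1)] .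
    have hs: "h \<noteq> s" using sK h(1) by blast
    have "ln h s \<inter> L \<noteq> {}" using uL h(1,2) lnwp lnwe by simp
    then obtain l where l: "l \<in> ln h s" "l \<in> L" by blast
    have "ln h s \<inter> M \<noteq> {}" using uM h(1,3) lnvp lnve by simp
    then obtain m where m: "m \<in> ln h s" "m \<in> M" by blast
    have lm: "l \<noteq> m"
    proof
      assume "l = m"
      then have "l = e" using meetLM[OF ps l(2)] m(2) by simp
      then have eh: "e \<in> ln h s" using l(1) by simp
      have hsL: "ln h s \<in> LL" using ln_LL[OF hX sX hs] .
      have "ln h s = ln e p" using lines_eq[OF hsL lnep eh ln_left[OF eX pX] ln_right[OF hX sX] s not_sym[OF se]] .
      then have "h \<in> ln e p" using ln_left[OF hX sX] by simp
      then have "K = ln e p" using lines_eq[OF KL lnep h(1) _ pK ln_right[OF eX pX] h(4)] by simp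
      then show False using eK ln_left[OF eX pX] by simp
    qed
    have "ln l m = ln h s" using ln_eq2[OF hX sX l(1) m(1) lm] .
    then have "s \<in> ln l m" using ln_right[OF hX sX] by simp
    then show ?thesis using plI[OF l(2) m(2)] by simp
  qed
qed

lemma LW: assumes ps: "ps e L M" and p: "p \<in> pl L M" "p \<notin> L" "p \<notin> M" and w: "w \<in> L"
  and s: "s \<in> ln w p"
  shows "s \<in> pl L M"
proof -
  have pX: "p \<in> X" using p(1) pl_X[OF ps] by blast
  have eX: "e \<in> X" using psD(6)[OF ps] .
  have wX: "w \<in> X" using memX[OF psD(1)[OF ps] w] .
  have pw: "p \<noteq> w" using p(2) w by blast
  have pe: "p \<noteq> e" using p(2) psD(4)[OF ps] by blast
  show ?thesis
  proof (cases "w = e")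
    case True then show ?thesis using P[OF ps p] s by simp
  next
    case we: False
    show ?thesis
    proof (cases "s = w \<or> s = p")
      case True then show ?thesis using p(1) pl_L[OF ps] w by blast
    next
      case False
      then have sw: "s \<noteq> w" and sp: "s \<noteq> p" by auto
      show ?thesis
      proof (cases "ln w p \<inter> M = {}")
        case False
        then obtain v' where v': "v' \<in> ln w p" "v' \<in> M" by blast
        have "v' \<noteq> w" using meetLM[OF ps w] v'(2) we by blast
        then have "ln w v' = ln w p" using ln_eq3[OF wX pX v'(1)] by simp
        then have "s \<in> ln w v'" using s by simp
        then show ?thesis using plI[OF w v'(2)] by simp
      next
        case wpM: True
        have sX: "s \<in> X" using ln_memX[OF wX pX s] .
        have lnws: "ln w s = ln w p" using ln_eq3[OF wX pX s sw] .
        have wpL: "ln w p \<in> LL" using ln_LL[OF wX pX not_sym[OF pw]] .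
        have lnwe: "ln w e = L" using ln_eq[OF psD(1)[OF ps] w psD(4)[OF ps] we] .
        have eLL: "ln e p \<in> LL" using ln_LL[OF eX pX not_sym[OF pe]] .
        have eNwp: "e \<notin> ln w p"
        proof
          assume ew: "e \<in> ln w p"
          have "ln w p = L" using lines_eq[OF wpL psD(1)[OF ps] ln_left[OF wX pX] w ew psD(4)[OF ps] we] .
          then show False using ln_right[OF wX pX] p(2) by simp
        qed
        have sL: "s \<notin> L"
        proof
          assume sL: "s \<in> L"
          have "ln w s = L" using ln_eq[OF psD(1)[OF ps] w sL not_sym[OF sw]] .
          then show False using lnws ln_right[OF wX pX] p(2) by simp
        qed
        have sM: "s \<notin> M" using wpM s by blast
        have s_ep: "s \<notin> ln e p"
        proof
          assume sep: "s \<in> ln e p"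
          have "ln w p = ln e p" using lines_eq[OF wpL eLL s sep ln_right[OF wX pX] ln_right[OF eX pX] sp] .
          then show False using eNwp ln_left[OF eX pX] by simp
        qed
        have se: "s \<noteq> e" using s_ep ln_left[OF eX pX] by blast
        have p_ws: "p \<in> ln w s" using lnws ln_right[OF wX pX] by simp
        have lnew: "ln e w = L" using lnwe ln_sym[of e w] by simp
        have p_ew: "p \<notin> ln e w" using lnew p(2) by simp
        obtain u where u: "\<forall>k\<in>ln e s. k \<noteq> u \<longrightarrow> ln k p \<inter> ln e w \<noteq> {}"
          using AX[OF eX wX sX p_ws p_ew] by blast
        obtain k where k: "k \<in> ln e s" "k \<noteq> e" "k \<noteq> s" "k \<noteq> u"
          using four_ln[OF eX sX not_sym[OF se]] by blast
        have kX: "k \<in> X" using ln_memX[OF eX sX k(1)] .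
        have esL: "ln e s \<in> LL" using ln_LL[OF eX sX not_sym[OF se]] .
        have lnek: "ln e k = ln e s" using ln_eq3[OF eX sX k(1) k(2)] .
        have kL: "k \<notin> L"
        proof
          assume kL: "k \<in> L"
          have "ln e k = L" using ln_eq[OF psD(1)[OF ps] psD(4)[OF ps] kL not_sym[OF k(2)]] .
          then show False using lnek ln_right[OF eX sX] sL by simp
        qed
        have kM: "k \<notin> M"
        proof
          assume kM: "k \<in> M"
          have "ln e k = M" using ln_eq[OF psD(2)[OF ps] psD(5)[OF ps] kM not_sym[OF k(2)]] .
          then show False using lnek ln_right[OF eX sX] sM by simp
        qed
        have kp: "k \<noteq> p"
        proof
          assume "k = p"
          then have "p \<in> ln e s" using k(1) by simp
          then have "ln e p = ln e s" using ln_eq3[OF eX sX _ pe] by simp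
          then show False using s_ep ln_right[OF eX sX] by simp
        qed
        have "ln k p \<inter> L \<noteq> {}" using u k(1,4) lnew by simp
        then obtain l where l: "l \<in> ln k p" "l \<in> L" by blast
        have kpL: "ln k p \<in> LL" using ln_LL[OF kX pX kp] .
        have lw: "l \<noteq> w"
        proof
          assume lw: "l = w"
          have "ln k p = ln w p"
            using lines_eq[OF kpL wpL l(1)[unfolded lw] ln_left[OF wX pX] ln_right[OF kX pX] ln_right[OF wX pX] not_sym[OF pw]] .
          then have kwp: "k \<in> ln w p" using ln_left[OF kX pX] by simp
          have "ln e s = ln w p" using lines_eq[OF esL wpL k(1) kwp ln_right[OF eX sX] s k(3)] .
          then show False using eNwp ln_left[OF eX sX] by simp
        qed
        have le: "l \<noteq> e"
        proof
          assume le: "l = e"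
          have ekp: "e \<in> ln k p" using l(1) le by simp
          have "ln k p = ln e p"
            using lines_eq[OF kpL eLL ekp ln_left[OF eX pX] ln_right[OF kX pX] ln_right[OF eX pX] not_sym[OF pe]] .
          then have kep: "k \<in> ln e p" using ln_left[OF kX pX] by simp
          have "ln e p = ln e s"
            using lines_eq[OF eLL esL ln_left[OF eX pX] ln_left[OF eX sX] kep k(1) not_sym[OF k(2)]] .
          then show False using s_ep ln_right[OF eX sX] by simp
        qed
        obtain w0 v0 where wv0: "w0 \<in> L" "v0 \<in> M" "w0 \<noteq> e" "v0 \<noteq> e" "p \<in> ln w0 v0"
          using legit[OF ps p] by blast
        have w0X: "w0 \<in> X" using memX[OF psD(1)[OF ps] wv0(1)] .
        have v0X: "v0 \<in> X" using memX[OF psD(2)[OF ps] wv0(2)] .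
        have p_v0w0: "p \<in> ln v0 w0" using wv0(5) ln_sym by simp
        have lnev0: "ln e v0 = M" using ln_eq[OF psD(2)[OF ps] psD(5)[OF ps] wv0(2) not_sym[OF wv0(4)]] .
        have lnew0: "ln e w0 = L" using ln_eq[OF psD(1)[OF ps] psD(4)[OF ps] wv0(1) not_sym[OF wv0(3)]] .
        have p_ev0: "p \<notin> ln e v0" using lnev0 p(3) by simp
        obtain g where g: "\<forall>l'\<in>ln e w0. l' \<noteq> g \<longrightarrow> ln l' p \<inter> ln e v0 \<noteq> {}"
          using AX[OF eX v0X w0X p_v0w0 p_ev0] by blast
        have wg: "w = g"
        proof (rule ccontr)
          assume "w \<noteq> g"
          then have "ln w p \<inter> M \<noteq> {}" using g w lnew0 lnev0 by simp
          then show False using wpM by simp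
        qed
        have "ln l p \<inter> M \<noteq> {}" using g l(2) lw wg lnew0 lnev0 by simp
        then obtain m where m: "m \<in> ln l p" "m \<in> M" by blast
        have lX: "l \<in> X" using memX[OF psD(1)[OF ps] l(2)] .
        have lp: "l \<noteq> p" using l(2) p(2) by blast
        have lM: "l \<notin> M" using meetLM[OF ps l(2)] le by blast
        have ml: "m \<noteq> l" using lM m(2) by blast
        have lnlp: "ln l p = ln k p" using ln_eq2[OF kX pX l(1) ln_right[OF kX pX] lp] .
        have lnlm: "ln l m = ln l p" using ln_eq3[OF lX pX m(1) ml] .
        have "k \<in> ln l m" using lnlm lnlp ln_left[OF kX pX] by simp
        then have kpl: "k \<in> pl L M" using plI[OF l(2) m(2)] by simp
        have "s \<in> ln e k" using lnek ln_right[OF eX sX] by simp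
        then show ?thesis using P[OF ps kpl kL kM] by simp
      qed
    qed
  qed
qed

lemma LV: assumes ps: "ps e L M" and p: "p \<in> pl L M" "p \<notin> L" "p \<notin> M" and v: "v \<in> M"
  and s: "s \<in> ln v p"
  shows "s \<in> pl L M"
proof -
  have "p \<in> pl M L" using p(1) pl_sym by simp
  then have "s \<in> pl M L" using LW[OF ps_sym[OF ps] _ p(3) p(2) v s] by simp
  then show ?thesis using pl_sym by simp
qed

lemma Rot: assumes ps: "ps e L M" and y: "y \<in> pl L M" "y \<notin> L" "y \<notin> M"
  shows "ps e L (ln e y)" "pl L (ln e y) = pl L M"
proof -
  have yX: "y \<in> X" using y(1) pl_X[OF ps] by blast
  have eX: "e \<in> X" using psD(6)[OF ps] .
  have ye: "y \<noteq> e" using y(2) psD(4)[OF ps] by blast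
  define N where "N = ln e y"
  have NL: "N \<in> LL" using ln_LL[OF eX yX not_sym[OF ye]] N_def by simp
  have eN: "e \<in> N" using ln_left[OF eX yX] N_def by simp
  have yN: "y \<in> N" using ln_right[OF eX yX] N_def by simp
  have LN: "L \<noteq> N" using yN y(2) by blast
  have ps2: "ps e L N" unfolding ps_def using psD[OF ps] NL LN eN by blast
  then show "ps e L (ln e y)" using N_def by simp
  have NM: "\<And>n. n \<in> N \<Longrightarrow> n \<noteq> e \<Longrightarrow> n \<notin> M"
  proof
    fix n assume n: "n \<in> N" "n \<noteq> e" "n \<in> M"
    have "N = M" using lines_eq[OF NL psD(2)[OF ps] n(1) n(3) eN psD(5)[OF ps] n(2)] .
    then show False using yN y(3) by simp
  qed
  have NLL: "\<And>n. n \<in> N \<Longrightarrow> n \<noteq> e \<Longrightarrow> n \<notin> L"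
  proof
    fix n assume n: "n \<in> N" "n \<noteq> e" "n \<in> L"
    have "N = L" using lines_eq[OF NL psD(1)[OF ps] n(1) n(3) eN psD(4)[OF ps] n(2)] .
    then show False using LN by simp
  qed
  have sub1: "pl L N \<subseteq> pl L M"
  proof
    fix q assume "q \<in> pl L N"
    then obtain w n where wn: "w \<in> L" "n \<in> N" "q \<in> ln w n" unfolding pl_def by blast
    show "q \<in> pl L M"
    proof (cases "n = e")
      case True
      then have "q \<in> L" using wn(1,3) ln_subL[OF psD(1)[OF ps] wn(1) psD(4)[OF ps]] by auto
      then show ?thesis using pl_L[OF ps] by blast
    next
      case False
      have npl: "n \<in> pl L M" using P[OF ps y] wn(2) N_def by simp
      show ?thesis using LW[OF ps npl NLL[OF wn(2) False] NM[OF wn(2) False] wn(1) wn(3)] .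
    qed
  qed
  obtain w0 v0 where wv0: "w0 \<in> L" "v0 \<in> M" "w0 \<noteq> e" "v0 \<noteq> e" "y \<in> ln w0 v0" "w0 \<noteq> v0" "y \<noteq> w0"
    using legit[OF ps y] by blast
  have w0X: "w0 \<in> X" using memX[OF psD(1)[OF ps] wv0(1)] .
  have v0X: "v0 \<in> X" using memX[OF psD(2)[OF ps] wv0(2)] .
  have "ln w0 y = ln w0 v0" using ln_eq3[OF w0X v0X wv0(5) wv0(7)] .
  then have "v0 \<in> ln w0 y" using ln_right[OF w0X v0X] by simp
  then have v0pl: "v0 \<in> pl L N" using plI[OF wv0(1) yN] by simp
  have v0L: "v0 \<notin> L" using meetLM[OF ps _ wv0(2)] wv0(4) by blast
  have v0N: "v0 \<notin> N" using NM wv0(2) wv0(4) by blast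
  have lnev0: "ln e v0 = M" using ln_eq[OF psD(2)[OF ps] psD(5)[OF ps] wv0(2) not_sym[OF wv0(4)]] .
  have Msub: "M \<subseteq> pl L N"
  proof
    fix m assume m: "m \<in> M"
    then have "m \<in> ln e v0" using lnev0 by simp
    then show "m \<in> pl L N" using P[OF ps2 v0pl v0L v0N] by simp
  qed
  have sub2: "pl L M \<subseteq> pl L N"
  proof
    fix q assume "q \<in> pl L M"
    then obtain w v where wv: "w \<in> L" "v \<in> M" "q \<in> ln w v" unfolding pl_def by blast
    show "q \<in> pl L N"
    proof (cases "v = e")
      case True
      then have "q \<in> L" using wv ln_subL[OF psD(1)[OF ps] wv(1) psD(4)[OF ps]] by auto
      then show ?thesis using pl_L[OF ps2] by blast
    next
      case False
      have vpl: "v \<in> pl L N" using Msub wv(2) by blast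
      have vL: "v \<notin> L" using meetLM[OF ps _ wv(2)] False by blast
      have vN: "v \<notin> N" using NM wv(2) False by blast
      show ?thesis using LW[OF ps2 vpl vL vN wv(1) wv(3)] .
    qed
  qed
  show "pl L (ln e y) = pl L M" using sub1 sub2 N_def by simp
qed

lemma flat_core: assumes ps: "ps e L M" and z1: "z1 \<in> pl L M" and z2: "z2 \<in> pl L M"
  and zz: "z1 \<noteq> z2" and s: "s \<in> ln z1 z2"
  shows "s \<in> pl L M"
proof -
  have eX: "e \<in> X" using psD(6)[OF ps] .
  have z1X: "z1 \<in> X" using z1 pl_X[OF ps] by blast
  have z2X: "z2 \<in> X" using z2 pl_X[OF ps] by blast
  have s21: "s \<in> ln z2 z1" using s ln_sym by simp
  consider (L1) "z1 \<in> L" | (M1) "z1 \<notin> L" "z1 \<in> M" | (G1) "z1 \<notin> L" "z1 \<notin> M" by blast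
  then show ?thesis
  proof cases
    case L1
    consider "z2 \<in> L" | "z2 \<notin> L" "z2 \<in> M" | "z2 \<notin> L" "z2 \<notin> M" by blast
    then show ?thesis
    proof cases
      case 1 then show ?thesis using s ln_subL[OF psD(1)[OF ps] L1 1] pl_L[OF ps] by blast
    next
      case 2 then show ?thesis using plI[OF L1 2(2) s] by blast
    next
      case 3 then show ?thesis using LW[OF ps z2 3 L1 s] by blast
    qed
  next
    case M1
    consider "z2 \<in> L" | "z2 \<notin> L" "z2 \<in> M" | "z2 \<notin> L" "z2 \<notin> M" by blast
    then show ?thesis
    proof cases
      case 1 then show ?thesis using plI[OF 1 M1(2) s21] by blast
    next
      case 2 then show ?thesis using s ln_subL[OF psD(2)[OF ps] M1(2) 2(2)] pl_M[OF ps] by blast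
    next
      case 3 then show ?thesis using LV[OF ps z2 3 M1(2) s] by blast
    qed
  next
    case G1
    consider "z2 \<in> L" | "z2 \<notin> L" "z2 \<in> M" | "z2 \<notin> L" "z2 \<notin> M" by blast
    then show ?thesis
    proof cases
      case 1 then show ?thesis using LW[OF ps z1 G1 1 s21] by blast
    next
      case 2 then show ?thesis using LV[OF ps z1 G1 2(2) s21] by blast
    next
      case 3
      show ?thesis
      proof (cases "e \<in> ln z1 z2")
        case True
        have ez1: "e \<noteq> z1" using G1(1) psD(4)[OF ps] by blast
        have "ln e z1 = ln z1 z2" using ln_eq2[OF z1X z2X True ln_left[OF z1X z2X] ez1] .
        then have "s \<in> ln e z1" using s by simp
        then show ?thesis using P[OF ps z1 G1] by simp
      next
        case False
        define N2 where "N2 = ln e z2"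
        have ps2: "ps e L N2" using Rot(1)[OF ps z2 3] N2_def by simp
        have eq2: "pl L N2 = pl L M" using Rot(2)[OF ps z2 3] N2_def by simp
        have N2L: "N2 \<in> LL" using psD(2)[OF ps2] .
        have z2N2: "z2 \<in> N2" using ln_right[OF eX z2X] N2_def by simp
        have z1N2: "z1 \<notin> N2"
        proof
          assume z1N2: "z1 \<in> N2"
          have "ln z1 z2 = N2" using ln_eq[OF N2L z1N2 z2N2 zz] .
          then show False using False ln_left[OF eX z2X] N2_def by simp
        qed
        have z1' : "z1 \<in> pl N2 L" using z1 eq2 pl_sym by simp
        have ps3: "ps e N2 (ln e z1)" using Rot(1)[OF ps_sym[OF ps2] z1' z1N2 G1(1)] .
        have eq3: "pl N2 (ln e z1) = pl N2 L" using Rot(2)[OF ps_sym[OF ps2] z1' z1N2 G1(1)] .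
        have "s \<in> pl N2 (ln e z1)" using plI[OF z2N2 ln_right[OF eX z1X] s21] .
        then show ?thesis using eq3 eq2 pl_sym by simp
      qed
    qed
  qed
qed

lemma pl_flat: assumes ps: "ps e L M" shows "flat X LL (pl L M)"
proof -
  have "\<forall>z1\<in>pl L M. \<forall>z2\<in>pl L M. z1 \<noteq> z2 \<longrightarrow> ln z1 z2 \<subseteq> pl L M"
    using flat_core[OF ps] by blast
  then show ?thesis using pl_X[OF ps] unfolding flat_def by blast
qed

lemma pl_in_flat: assumes F: "flat X LL F" and LF: "L \<subseteq> F" and MF: "M \<subseteq> F"
  shows "pl L M \<subseteq> F"
proof
  fix q assume "q \<in> pl L M"
  then obtain w v where wv: "w \<in> L" "v \<in> M" "q \<in> ln w v" unfolding pl_def by blast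
  show "q \<in> F"
  proof (cases "w = v")
    case True then show ?thesis using wv LF by auto
  next
    case False
    have "ln w v \<subseteq> F" using F wv(1,2) LF MF False unfolding flat_def by blast
    then show ?thesis using wv(3) by blast
  qed
qed

lemma flat_ln: assumes "flat X LL F" "a \<in> F" "b \<in> F" shows "ln a b \<subseteq> F"
  using assms unfolding flat_def by (cases "a = b") auto

lemma MoveBase: assumes ps: "ps e L M" and a: "a \<in> L" "a \<noteq> e" and m: "m \<in> M" "m \<noteq> e"
  shows "ps a L (ln a m)" "pl L (ln a m) = pl L M"
proof -
  have aX: "a \<in> X" using memX[OF psD(1)[OF ps] a(1)] .
  have mX: "m \<in> X" using memX[OF psD(2)[OF ps] m(1)] .
  have eX: "e \<in> X" using psD(6)[OF ps] .
  have am: "a \<noteq> m" using meetLM[OF ps a(1)] a(2) m(1) by blast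
  define N where "N = ln a m"
  have NL: "N \<in> LL" using ln_LL[OF aX mX am] N_def by simp
  have aN: "a \<in> N" using ln_left[OF aX mX] N_def by simp
  have mN: "m \<in> N" using ln_right[OF aX mX] N_def by simp
  have mL: "m \<notin> L" using meetLM[OF ps _ m(1)] m(2) by blast
  have LN: "L \<noteq> N" using mN mL by blast
  have ps2: "ps a L N" unfolding ps_def using psD[OF ps] NL LN a(1) aN by blast
  then show "ps a L (ln a m)" using N_def by simp
  have F1: "flat X LL (pl L M)" using pl_flat[OF ps] .
  have F2: "flat X LL (pl L N)" using pl_flat[OF ps2] .
  have "N \<subseteq> pl L M" using flat_ln[OF F1, of a m] pl_L[OF ps] pl_M[OF ps] a(1) m(1) N_def by blast
  then have s1: "pl L N \<subseteq> pl L M" using pl_in_flat[OF F1 pl_L[OF ps]] by blast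
  have lnem: "ln e m = M" using ln_eq[OF psD(2)[OF ps] psD(5)[OF ps] m(1) not_sym[OF m(2)]] .
  have "M \<subseteq> pl L N" using flat_ln[OF F2, of e m] pl_L[OF ps2] pl_M[OF ps2] psD(4)[OF ps] mN lnem by blast
  then have s2: "pl L M \<subseteq> pl L N" using pl_in_flat[OF F2 pl_L[OF ps2]] by blast
  show "pl L (ln a m) = pl L M" using s1 s2 N_def by simp
qed

definition isPl :: "'a set \<Rightarrow> bool" where
  "isPl P \<longleftrightarrow> (\<exists>e L M. ps e L M \<and> P = pl L M)"

lemma isPl_flat: "isPl P \<Longrightarrow> flat X LL P"
  unfolding isPl_def using pl_flat by blast

lemma isPlX: "isPl P \<Longrightarrow> P \<subseteq> X"
  using isPl_flat unfolding flat_def by blast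

lemma Rot2: assumes ps: "ps e L M" and N: "N \<in> LL" "e \<in> N" "N \<subseteq> pl L M" "N \<noteq> L"
  shows "ps e L N" "pl L N = pl L M"
proof -
  have "ps e L N \<and> pl L N = pl L M"
  proof (cases "N = M")
    case True then show ?thesis using ps by simp
  next
    case False
    obtain y where y: "y \<in> N" "y \<noteq> e" using other_pt[OF N(1)] by blast
    have yL: "y \<notin> L"
    proof
      assume "y \<in> L" then have "N = L" using lines_eq[OF N(1) psD(1)[OF ps] y(1) _ N(2) psD(4)[OF ps] y(2)] by simp
      then show False using N(4) by simp
    qed
    have yM: "y \<notin> M"
    proof
      assume "y \<in> M" then have "N = M" using lines_eq[OF N(1) psD(2)[OF ps] y(1) _ N(2) psD(5)[OF ps] y(2)] by simp
      then show False using False by simp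
    qed
    have ypl: "y \<in> pl L M" using N(3) y(1) by blast
    have "ln e y = N" using ln_eq[OF N(1) N(2) y(1) not_sym[OF y(2)]] .
    then show ?thesis using Rot[OF ps ypl yL yM] by simp
  qed
  then show "ps e L N" "pl L N = pl L M" by auto
qed

lemma BaseHere: assumes P: "isPl P" and a: "a \<in> P" shows "\<exists>L M. ps a L M \<and> P = pl L M"
proof -
  obtain e L M where ps: "ps e L M" and PP: "P = pl L M" using P unfolding isPl_def by blast
  consider "a = e" | "a \<in> L" "a \<noteq> e" | "a \<in> M" "a \<noteq> e" | "a \<notin> L" "a \<notin> M" by blast
  then show ?thesis
  proof cases
    case 1 then show ?thesis using ps PP by blast
  next
    case 2
    obtain m where m: "m \<in> M" "m \<noteq> e" using other_pt[OF psD(2)[OF ps]] by blast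
    show ?thesis using MoveBase[OF ps 2 m] PP by metis
  next
    case 3
    obtain m where m: "m \<in> L" "m \<noteq> e" using other_pt[OF psD(1)[OF ps]] by blast
    have "P = pl M L" using PP pl_sym by simp
    then show ?thesis using MoveBase[OF ps_sym[OF ps] 3 m] by metis
  next
    case 4
    have apl: "a \<in> pl L M" using a PP by simp
    obtain w0 v0 where wv0: "w0 \<in> L" "v0 \<in> M" "w0 \<noteq> e" "v0 \<noteq> e" "a \<in> ln w0 v0" "w0 \<noteq> v0" "a \<noteq> w0"
      using legit[OF ps apl 4] by blast
    define T where "T = ln w0 v0"
    have ps1: "ps w0 L T" using MoveBase(1)[OF ps wv0(1,3,2,4)] T_def by simp
    have eq1: "pl L T = pl L M" using MoveBase(2)[OF ps wv0(1,3,2,4)] T_def by simp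
    have aT: "a \<in> T" using wv0(5) T_def by simp
    obtain l where l: "l \<in> L" "l \<noteq> w0" using other_pt[OF psD(1)[OF ps]] by blast
    have ps2: "ps a T (ln a l)" using MoveBase(1)[OF ps_sym[OF ps1] aT wv0(7) l] .
    have eq2: "pl T (ln a l) = pl T L" using MoveBase(2)[OF ps_sym[OF ps1] aT wv0(7) l] .
    have "P = pl T (ln a l)" using eq2 eq1 PP pl_sym by simp
    then show ?thesis using ps2 by blast
  qed
qed

lemma BaseAny: assumes P: "isPl P" and A: "A \<in> LL" "A \<subseteq> P" and B: "B \<in> LL" "B \<subseteq> P"
  and AB: "A \<noteq> B" and a: "a \<in> A" "a \<in> B"
  shows "ps a A B" "P = pl A B"
proof -
  have aP: "a \<in> P" using a A by blast
  obtain L M where ps: "ps a L M" and PP: "P = pl L M" using BaseHere[OF P aP] by blast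
  have "ps a A B \<and> P = pl A B"
  proof (cases "A = L")
    case True
    have "B \<noteq> L" using AB True by simp
    then show ?thesis using Rot2[OF ps B(1) a(2) _] B(2) PP True by simp
  next
    case False
    have ps1: "ps a L A" using Rot2(1)[OF ps A(1) a(1) _ False] A(2) PP by simp
    have eq1: "pl L A = pl L M" using Rot2(2)[OF ps A(1) a(1) _ False] A(2) PP by simp
    have ps1': "ps a A L" using ps_sym[OF ps1] .
    have eq1': "pl A L = P" using eq1 PP pl_sym by simp
    show ?thesis
    proof (cases "B = L")
      case True then show ?thesis using ps1' eq1' by simp
    next
      case False
      have "B \<subseteq> pl A L" using B(2) eq1' by simp
      then show ?thesis using Rot2[OF ps1' B(1) a(2) _ AB[symmetric]] eq1' by simp
    qed
  qed
  then show "ps a A B" "P = pl A B" by auto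
qed

lemma DP: assumes ps: "ps e L M" and K: "K \<in> LL" "K \<subseteq> pl L M" and KL: "K \<inter> L = {}"
  and KM: "K \<inter> M = {}"
  shows False
proof -
  have eX: "e \<in> X" using psD(6)[OF ps] .
  obtain k1 where k1: "k1 \<in> K" using other_pt[OF K(1)] by blast
  obtain k2 where k2: "k2 \<in> K" "k2 \<noteq> k1" using other_pt[OF K(1)] by blast
  have k1X: "k1 \<in> X" using memX[OF K(1) k1] .
  have k2X: "k2 \<in> X" using memX[OF K(1) k2(1)] .
  have k1pl: "k1 \<in> pl L M" using K(2) k1 by blast
  have k2pl: "k2 \<in> pl L M" using K(2) k2(1) by blast
  have k1L: "k1 \<notin> L" using KL k1 by blast
  have k1M: "k1 \<notin> M" using KM k1 by blast
  have k2L: "k2 \<notin> L" using KL k2(1) by blast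
  have k2M: "k2 \<notin> M" using KM k2(1) by blast
  have eK: "e \<notin> K" using KL psD(4)[OF ps] by blast
  have k1e: "k1 \<noteq> e" using k1L psD(4)[OF ps] by blast
  define N1 where "N1 = ln e k1"
  have psL: "ps e L N1" using Rot(1)[OF ps k1pl k1L k1M] N1_def by simp
  have eqL: "pl L N1 = pl L M" using Rot(2)[OF ps k1pl k1L k1M] N1_def by simp
  have k1pl': "k1 \<in> pl M L" using k1pl pl_sym by simp
  have psM: "ps e M N1" using Rot(1)[OF ps_sym[OF ps] k1pl' k1M k1L] N1_def by simp
  have eqM: "pl M N1 = pl M L" using Rot(2)[OF ps_sym[OF ps] k1pl' k1M k1L] N1_def by simp
  have N1L: "N1 \<in> LL" using psD(2)[OF psL] .
  have k1N1: "k1 \<in> N1" using ln_right[OF eX k1X] N1_def by simp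
  have eN1: "e \<in> N1" using ln_left[OF eX k1X] N1_def by simp
  have KN: "ln k1 k2 = K" using ln_eq[OF K(1) k1 k2(1) not_sym[OF k2(2)]] .
  have k2N1: "k2 \<notin> N1"
  proof
    assume "k2 \<in> N1"
    then have "K = N1" using lines_eq[OF K(1) N1L k1 k1N1 k2(1) _ not_sym[OF k2(2)]] by simp
    then show False using eK eN1 by simp
  qed
  have k2plL: "k2 \<in> pl L N1" using k2pl eqL by simp
  obtain w1 n1 where wn1: "w1 \<in> L" "n1 \<in> N1" "w1 \<noteq> e" "n1 \<noteq> e" "k2 \<in> ln w1 n1"
    using legit[OF psL k2plL k2L k2N1] by blast
  have w1X: "w1 \<in> X" using memX[OF psD(1)[OF ps] wn1(1)] .
  have n1X: "n1 \<in> X" using memX[OF N1L wn1(2)] .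
  have lnew1: "ln e w1 = L" using ln_eq[OF psD(1)[OF ps] psD(4)[OF ps] wn1(1) not_sym[OF wn1(3)]] .
  have lnen1: "ln e n1 = N1" using ln_eq[OF N1L eN1 wn1(2) not_sym[OF wn1(4)]] .
  have k2ew1: "k2 \<notin> ln e w1" using lnew1 k2L by simp
  obtain gL where gL: "\<forall>y\<in>ln e n1. y \<noteq> gL \<longrightarrow> ln y k2 \<inter> ln e w1 \<noteq> {}"
    using AX[OF eX w1X n1X wn1(5) k2ew1] by blast
  have k1gL: "k1 = gL"
  proof (rule ccontr)
    assume "k1 \<noteq> gL"
    then have "ln k1 k2 \<inter> L \<noteq> {}" using gL k1N1 lnen1 lnew1 by simp
    then show False using KN KL by simp
  qed
  have k2plM: "k2 \<in> pl M N1" using k2pl eqM pl_sym by simp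
  obtain w2 n2 where wn2: "w2 \<in> M" "n2 \<in> N1" "w2 \<noteq> e" "n2 \<noteq> e" "k2 \<in> ln w2 n2"
    using legit[OF psM k2plM k2M k2N1] by blast
  have w2X: "w2 \<in> X" using memX[OF psD(2)[OF ps] wn2(1)] .
  have n2X: "n2 \<in> X" using memX[OF N1L wn2(2)] .
  have lnew2: "ln e w2 = M" using ln_eq[OF psD(2)[OF ps] psD(5)[OF ps] wn2(1) not_sym[OF wn2(3)]] .
  have lnen2: "ln e n2 = N1" using ln_eq[OF N1L eN1 wn2(2) not_sym[OF wn2(4)]] .
  have k2ew2: "k2 \<notin> ln e w2" using lnew2 k2M by simp
  obtain gM where gM: "\<forall>y\<in>ln e n2. y \<noteq> gM \<longrightarrow> ln y k2 \<inter> ln e w2 \<noteq> {}"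
    using AX[OF eX w2X n2X wn2(5) k2ew2] by blast
  have k1gM: "k1 = gM"
  proof (rule ccontr)
    assume "k1 \<noteq> gM"
    then have "ln k1 k2 \<inter> M \<noteq> {}" using gM k1N1 lnen2 lnew2 by simp
    then show False using KN KM by simp
  qed
  obtain y' where y': "y' \<in> N1" "y' \<noteq> e" "y' \<noteq> k1" using four[OF N1L] by blast
  have y'X: "y' \<in> X" using memX[OF N1L y'(1)] .
  have "ln y' k2 \<inter> L \<noteq> {}" using gL y' k1gL lnen1 lnew1 by simp
  then obtain l where l: "l \<in> ln y' k2" "l \<in> L" by blast
  have "ln y' k2 \<inter> M \<noteq> {}" using gM y' k1gM lnen2 lnew2 by simp
  then obtain m where m: "m \<in> ln y' k2" "m \<in> M" by blast
  have y'k2: "y' \<noteq> k2" using k2N1 y'(1) by blast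
  have ek2: "e \<notin> ln y' k2"
  proof
    assume ek: "e \<in> ln y' k2"
    have "ln y' k2 = N1"
      using lines_eq[OF ln_LL[OF y'X k2X y'k2] N1L ek eN1 ln_left[OF y'X k2X] y'(1) not_sym[OF y'(2)]] .
    then show False using ln_right[OF y'X k2X] k2N1 by simp
  qed
  have le: "l \<noteq> e" using ek2 l(1) by blast
  have me: "m \<noteq> e" using ek2 m(1) by blast
  have lm: "l \<noteq> m" using meetLM[OF ps l(2)] m(2) le by blast
  have lnk1y': "ln k1 y' = N1" using ln_eq[OF N1L k1N1 y'(1) not_sym[OF y'(3)]] .
  have e_k1y': "e \<in> ln k1 y'" using lnk1y' eN1 by simp
  have e_k2k1: "e \<notin> ln k2 k1" using KN ln_sym[of k2 k1] eK by simp
  obtain g where g: "\<forall>h\<in>ln k2 y'. h \<noteq> g \<longrightarrow> ln h e \<inter> ln k2 k1 \<noteq> {}"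
    using AX[OF k2X k1X y'X e_k1y' e_k2k1] by blast
  have l_k2y': "l \<in> ln k2 y'" using l(1) ln_sym by simp
  have m_k2y': "m \<in> ln k2 y'" using m(1) ln_sym by simp
  have lnle: "ln l e = L" using ln_eq[OF psD(1)[OF ps] l(2) psD(4)[OF ps] le] .
  have lnme: "ln m e = M" using ln_eq[OF psD(2)[OF ps] m(2) psD(5)[OF ps] me] .
  have k21: "ln k2 k1 = K" using KN ln_sym by simp
  have lg: "l = g"
  proof (rule ccontr)
    assume "l \<noteq> g"
    then have "ln l e \<inter> ln k2 k1 \<noteq> {}" using g l_k2y' by blast
    then show False using lnle k21 KL by blast
  qed
  have mg: "m = g"
  proof (rule ccontr)
    assume "m \<noteq> g"
    then have "ln m e \<inter> ln k2 k1 \<noteq> {}" using g m_k2y' by blast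
    then show False using lnme k21 KM by blast
  qed
  show False using lm lg mg by simp
qed

lemma plane3: assumes X: "a \<in> X" "b \<in> X" "c \<in> X" and ab: "a \<noteq> b" and c: "c \<notin> ln a b"
  shows "ps a (ln a b) (ln a c)" "isPl (pl (ln a b) (ln a c))" "a \<in> pl (ln a b) (ln a c)"
    "b \<in> pl (ln a b) (ln a c)" "c \<in> pl (ln a b) (ln a c)"
proof -
  have ac: "a \<noteq> c" using c ln_left[OF X(1,2)] by blast
  have ne: "ln a b \<noteq> ln a c" using c ln_right[OF X(1,3)] by blast
  show ps: "ps a (ln a b) (ln a c)" unfolding ps_def
    using ln_LL[OF X(1,2) ab] ln_LL[OF X(1,3) ac] ne ln_left[OF X(1,2)] ln_left[OF X(1,3)] by blast
  show "isPl (pl (ln a b) (ln a c))" unfolding isPl_def using ps by blast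
  show "a \<in> pl (ln a b) (ln a c)" using pl_L[OF ps] ln_left[OF X(1,2)] by blast
  show "b \<in> pl (ln a b) (ln a c)" using pl_L[OF ps] ln_right[OF X(1,2)] by blast
  show "c \<in> pl (ln a b) (ln a c)" using pl_M[OF ps] ln_right[OF X(1,3)] by blast
qed

lemma plane_eq: assumes P: "isPl P" and Q: "isPl Q" and a: "a \<in> P" "a \<in> Q" and b: "b \<in> P" "b \<in> Q"
  and c: "c \<in> P" "c \<in> Q" and ab: "a \<noteq> b" and cab: "c \<notin> ln a b"
  shows "P = Q"
proof -
  have X: "a \<in> X" "b \<in> X" "c \<in> X" using a b c isPlX[OF P] by auto
  have ac: "a \<noteq> c" using cab ln_left[OF X(1,2)] by blast
  have ne: "ln a b \<noteq> ln a c" using cab ln_right[OF X(1,3)] by blast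
  have L1: "ln a b \<in> LL" "ln a c \<in> LL" using ln_LL[OF X(1,2) ab] ln_LL[OF X(1,3) ac] by auto
  have aa: "a \<in> ln a b" "a \<in> ln a c" using ln_left X by auto
  have "P = pl (ln a b) (ln a c)"
    using BaseAny(2)[OF P L1(1) flat_ln[OF isPl_flat[OF P] a(1) b(1)] L1(2) flat_ln[OF isPl_flat[OF P] a(1) c(1)] ne aa] .
  moreover have "Q = pl (ln a b) (ln a c)"
    using BaseAny(2)[OF Q L1(1) flat_ln[OF isPl_flat[OF Q] a(2) b(2)] L1(2) flat_ln[OF isPl_flat[OF Q] a(2) c(2)] ne aa] .
  ultimately show ?thesis by simp
qed

lemma plane_int: assumes P: "isPl P" and Q: "isPl Q" and PQ: "P \<noteq> Q" and a: "a \<in> P" "a \<in> Q"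
  and b: "b \<in> P" "b \<in> Q" and ab: "a \<noteq> b"
  shows "P \<inter> Q = ln a b"
proof
  show "ln a b \<subseteq> P \<inter> Q" using flat_ln[OF isPl_flat[OF P] a(1) b(1)] flat_ln[OF isPl_flat[OF Q] a(2) b(2)] by blast
  show "P \<inter> Q \<subseteq> ln a b"
  proof
    fix c assume c: "c \<in> P \<inter> Q"
    show "c \<in> ln a b"
    proof (rule ccontr)
      assume "c \<notin> ln a b"
      then have "P = Q" using plane_eq[OF P Q a b _ _ ab] c by blast
      then show False using PQ by simp
    qed
  qed
qed

lemma PFex: assumes P: "isPl P" and K: "K \<in> LL" "K \<subseteq> P" and z: "z \<in> P" "z \<notin> K"
  shows "\<exists>\<Lambda>\<in>LL. z \<in> \<Lambda> \<and> \<Lambda> \<subseteq> P \<and> \<Lambda> \<inter> K = {}"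
proof -
  obtain k1 where k1: "k1 \<in> K" using other_pt[OF K(1)] by blast
  obtain k2 where k2: "k2 \<in> K" "k2 \<noteq> k1" using other_pt[OF K(1)] by blast
  have k1X: "k1 \<in> X" using memX[OF K(1) k1] .
  have k2X: "k2 \<in> X" using memX[OF K(1) k2(1)] .
  have zX: "z \<in> X" using z(1) isPlX[OF P] by blast
  have zk2: "k2 \<noteq> z" using z(2) k2(1) by blast
  obtain y where y: "y \<in> ln k2 z" "y \<noteq> k2" "y \<noteq> z" using four_ln[OF k2X zX zk2] by blast
  have yX: "y \<in> X" using ln_memX[OF k2X zX y(1)] .
  have lnk2y: "ln k2 y = ln k2 z" using ln_eq3[OF k2X zX y(1) y(2)] .
  have z_k2y: "z \<in> ln k2 y" using lnk2y ln_right[OF k2X zX] by simp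
  have lnk1k2: "ln k1 k2 = K" using ln_eq[OF K(1) k1 k2(1) not_sym[OF k2(2)]] .
  have z_k1k2: "z \<notin> ln k1 k2" using lnk1k2 z(2) by simp
  obtain u where u: "u \<in> ln k1 y" "ln u z \<inter> ln k1 k2 = {}" using AX[OF k1X k2X yX z_k2y z_k1k2] by blast
  have uX: "u \<in> X" using ln_memX[OF k1X yX u(1)] .
  have uz: "u \<noteq> z"
  proof
    assume "u = z"
    then have z1: "z \<in> ln k1 y" using u(1) by simp
    have zy: "z \<noteq> y" using y(3) by simp
    have e1: "ln z y = ln k1 y" using ln_eq2[OF k1X yX z1 ln_right[OF k1X yX] zy] .
    have e2: "ln z y = ln k2 z" using ln_eq2[OF k2X zX ln_right[OF k2X zX] y(1) zy] .
    have k1in: "k1 \<in> ln k2 z" using e1 e2 ln_left[OF k1X yX] by simp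
    have "ln k2 z = K" using lines_eq[OF ln_LL[OF k2X zX zk2] K(1) k1in k1 ln_left[OF k2X zX] k2(1) not_sym[OF k2(2)]] .
    then show False using ln_right[OF k2X zX] z(2) by simp
  qed
  have k2P: "k2 \<in> P" using K(2) k2(1) by blast
  have k1P: "k1 \<in> P" using K(2) k1 by blast
  have yP: "y \<in> P" using flat_ln[OF isPl_flat[OF P] k2P z(1)] y(1) by blast
  have uP: "u \<in> P" using flat_ln[OF isPl_flat[OF P] k1P yP] u(1) by blast
  show ?thesis
  proof (rule bexI[of _ "ln u z"], intro conjI)
    show "z \<in> ln u z" using ln_right[OF uX zX] .
    show "ln u z \<subseteq> P" using flat_ln[OF isPl_flat[OF P] uP z(1)] .
    show "ln u z \<inter> K = {}" using u(2) lnk1k2 by simp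
    show "ln u z \<in> LL" using ln_LL[OF uX zX uz] .
  qed
qed

lemma PFuniq: assumes P: "isPl P" and K: "K \<in> LL" "K \<subseteq> P" and z: "z \<notin> K"
  and L1: "\<Lambda>1 \<in> LL" "z \<in> \<Lambda>1" "\<Lambda>1 \<subseteq> P" "\<Lambda>1 \<inter> K = {}"
  and L2: "\<Lambda>2 \<in> LL" "z \<in> \<Lambda>2" "\<Lambda>2 \<subseteq> P" "\<Lambda>2 \<inter> K = {}"
  shows "\<Lambda>1 = \<Lambda>2"
proof (rule ccontr)
  assume ne: "\<Lambda>1 \<noteq> \<Lambda>2"
  have ps: "ps z \<Lambda>1 \<Lambda>2" using BaseAny(1)[OF P L1(1) L1(3) L2(1) L2(3) ne L1(2) L2(2)] .
  have PP: "P = pl \<Lambda>1 \<Lambda>2" using BaseAny(2)[OF P L1(1) L1(3) L2(1) L2(3) ne L1(2) L2(2)] .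
  have "K \<subseteq> pl \<Lambda>1 \<Lambda>2" using K(2) PP by simp
  moreover have "K \<inter> \<Lambda>1 = {}" "K \<inter> \<Lambda>2 = {}" using L1(4) L2(4) by auto
  ultimately show False using DP[OF ps K(1)] by blast
qed

lemma PFmeet: assumes P: "isPl P" and K: "K \<in> LL" "K \<subseteq> P" and N: "N \<in> LL" "N \<subseteq> P" "z \<in> N"
  and z: "z \<notin> K" and L: "\<Lambda> \<in> LL" "z \<in> \<Lambda>" "\<Lambda> \<subseteq> P" "\<Lambda> \<inter> K = {}" and NL: "N \<noteq> \<Lambda>"
  shows "N \<inter> K \<noteq> {}"
proof
  assume "N \<inter> K = {}"
  then have "N = \<Lambda>" using PFuniq[OF P K z N(1) N(3) N(2) _ L] by simp
  then show False using NL by simp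
qed

end


context AL begin

definition RR :: "'a set \<Rightarrow> 'a set \<Rightarrow> 'a set" where
  "RR A D = {s. \<exists>y\<in>D. \<exists>c\<in>A. s \<in> ln c y}"

lemma RRI: "y \<in> D \<Longrightarrow> c \<in> A \<Longrightarrow> s \<in> ln c y \<Longrightarrow> s \<in> RR A D"
  unfolding RR_def by blast

lemma le1: assumes "L \<in> LL" "N \<in> LL" "L \<noteq> N" "a \<in> L" "a \<in> N" "b \<in> L" "b \<in> N" shows "a = b"
  using lines_eq[OF assms(1,2,4,5,6,7)] assms(3) by blast

lemma at_most1: assumes "L \<in> LL" "N \<in> LL" "L \<noteq> N" shows "\<exists>b. \<forall>x\<in>L \<inter> N. x = b"
proof (cases "L \<inter> N = {}")
  case True then show ?thesis by blast
next
  case False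
  then obtain b where "b \<in> L \<inter> N" by blast
  then show ?thesis using le1[OF assms] by blast
qed

lemma flat_line: assumes "a \<in> X" "b \<in> X" shows "flat X LL (ln a b)"
  unfolding flat_def
proof (intro conjI ballI impI)
  show "ln a b \<subseteq> X" using lnX[OF assms] .
  fix x y assume "x \<in> ln a b" "y \<in> ln a b" "x \<noteq> y"
  then show "ln x y \<subseteq> ln a b" using ln_eq2[OF assms] by simp
qed

context
  fixes \<rho> m n D
  assumes rho: "isPl \<rho>" and m: "m \<in> \<rho>" and nX: "n \<in> X" and n: "n \<notin> \<rho>" and D: "D = ln m n"
begin

lemma mX: "m \<in> X" using m isPlX[OF rho] by blast
lemma mn: "m \<noteq> n" using m n by blast
lemma DL: "D \<in> LL" using ln_LL[OF mX nX mn] D by simp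
lemma mD: "m \<in> D" using ln_left[OF mX nX] D by simp
lemma nD: "n \<in> D" using ln_right[OF mX nX] D by simp
lemma rflat: "flat X LL \<rho>" using isPl_flat[OF rho] .

lemma Drho: assumes "d \<in> D" "d \<in> \<rho>" shows "d = m"
proof (rule ccontr)
  assume dm: "d \<noteq> m"
  have "ln m d = D" using ln_eq[OF DL mD assms(1) not_sym[OF dm]] .
  moreover have "ln m d \<subseteq> \<rho>" using flat_ln[OF rflat m assms(2)] .
  ultimately show False using nD n by blast
qed

lemma rhoR: "\<rho> \<subseteq> RR \<rho> D"
proof
  fix c assume c: "c \<in> \<rho>"
  have "c \<in> X" using c isPlX[OF rho] by blast
  then have "c \<in> ln c m" using ln_left mX by blast
  then show "c \<in> RR \<rho> D" using RRI[OF mD c] by simp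
qed

lemma DR: "D \<subseteq> RR \<rho> D"
proof
  fix d assume d: "d \<in> D"
  have "d \<in> X" using memX[OF DL d] .
  then have "d \<in> ln m d" using ln_right mX by blast
  then show "d \<in> RR \<rho> D" using RRI[OF d m] by simp
qed

lemma RX: "RR \<rho> D \<subseteq> X"
proof
  fix s assume "s \<in> RR \<rho> D"
  then obtain y c where "y \<in> D" "c \<in> \<rho>" "s \<in> ln c y" unfolding RR_def by blast
  then show "s \<in> X" using ln_memX memX[OF DL] isPlX[OF rho] by blast
qed

lemma gp: assumes c: "c \<in> \<rho>" "c \<noteq> m"
  shows "ps m (ln m c) D" "pl (ln m c) D \<subseteq> RR \<rho> D"
proof -
  have cX: "c \<in> X" using c isPlX[OF rho] by blast
  have cD: "c \<notin> D" using Drho c by blast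
  have ne: "ln m c \<noteq> D" using cD ln_right[OF mX cX] by blast
  show ps: "ps m (ln m c) D" unfolding ps_def
    using ln_LL[OF mX cX not_sym[OF c(2)]] DL ne ln_left[OF mX cX] mD by blast
  have sub: "ln m c \<subseteq> \<rho>" using flat_ln[OF rflat m c(1)] .
  show "pl (ln m c) D \<subseteq> RR \<rho> D"
  proof
    fix q assume "q \<in> pl (ln m c) D"
    then obtain w v where "w \<in> ln m c" "v \<in> D" "q \<in> ln w v" unfolding pl_def by blast
    then show "q \<in> RR \<rho> D" using RRI[of v D w \<rho> q] sub by blast
  qed
qed

lemma Rmem: assumes s: "s \<in> RR \<rho> D" "s \<notin> D" shows "\<exists>c\<in>\<rho>. c \<noteq> m \<and> s \<in> pl (ln m c) D"
proof -
  obtain y c where yc: "y \<in> D" "c \<in> \<rho>" "s \<in> ln c y" using s(1) unfolding RR_def by blast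
  have cm: "c \<noteq> m"
  proof
    assume "c = m"
    then have "ln c y \<subseteq> D" using ln_subL[OF DL mD yc(1)] by simp
    then show False using yc(3) s(2) by blast
  qed
  have cX: "c \<in> X" using yc(2) isPlX[OF rho] by blast
  have "c \<in> ln m c" using ln_right[OF mX cX] .
  then have "s \<in> pl (ln m c) D" using plI[OF _ yc(1) yc(3)] by simp
  then show ?thesis using yc(2) cm by blast
qed

lemma F2: assumes y: "y \<in> D" and s: "s \<in> RR \<rho> D" shows "ln y s \<subseteq> RR \<rho> D"
proof (cases "s \<in> D")
  case True then show ?thesis using ln_subL[OF DL y True] DR by blast
next
  case False
  obtain c where c: "c \<in> \<rho>" "c \<noteq> m" "s \<in> pl (ln m c) D" using Rmem[OF s False] by blast
  have F: "flat X LL (pl (ln m c) D)" using pl_flat[OF gp(1)[OF c(1,2)]] .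
  have "y \<in> pl (ln m c) D" using pl_M[OF gp(1)[OF c(1,2)]] y by blast
  then have "ln y s \<subseteq> pl (ln m c) D" using flat_ln[OF F _ c(3)] by blast
  then show ?thesis using gp(2)[OF c(1,2)] by blast
qed

lemma ystar: assumes s: "s \<in> RR \<rho> D" "s \<notin> D" "s \<notin> \<rho>"
  shows "\<exists>c\<in>\<rho>. c \<noteq> m \<and> s \<in> pl (ln m c) D \<and> (\<exists>ys. \<forall>y\<in>D. y \<noteq> m \<longrightarrow> y \<noteq> ys \<longrightarrow>
           (\<exists>c'\<in>ln m c. c' \<noteq> m \<and> s \<in> ln c' y))"
proof -
  obtain c where c: "c \<in> \<rho>" "c \<noteq> m" "s \<in> pl (ln m c) D" using Rmem[OF s(1,2)] by blast
  define l where "l = ln m c"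
  have ps: "ps m l D" using gp(1)[OF c(1,2)] l_def by simp
  have P: "isPl (pl l D)" unfolding isPl_def using ps by blast
  have lsub: "l \<subseteq> \<rho>" using flat_ln[OF rflat m c(1)] l_def by simp
  have sl: "s \<notin> l" using lsub s(3) by blast
  have sP: "s \<in> pl l D" using c(3) l_def by simp
  have sX: "s \<in> X" using sP pl_X[OF ps] by blast
  obtain Lam where Lam: "Lam \<in> LL" "s \<in> Lam" "Lam \<subseteq> pl l D" "Lam \<inter> l = {}"
    using PFex[OF P psD(1)[OF ps] pl_L[OF ps] sP sl] by blast
  have "Lam \<inter> D \<noteq> {}"
  proof
    assume "Lam \<inter> D = {}"
    then show False using DP[OF ps Lam(1) Lam(3) Lam(4)] by blast
  qed
  then obtain ys where ys: "ys \<in> Lam" "ys \<in> D" by blast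
  have "\<forall>y\<in>D. y \<noteq> m \<longrightarrow> y \<noteq> ys \<longrightarrow> (\<exists>c'\<in>l. c' \<noteq> m \<and> s \<in> ln c' y)"
  proof (intro ballI impI)
    fix y assume y: "y \<in> D" "y \<noteq> m" "y \<noteq> ys"
    have yX: "y \<in> X" using memX[OF DL y(1)] .
    have ys': "y \<noteq> s" using y(1) s(2) by blast
    have NL: "ln y s \<in> LL" using ln_LL[OF yX sX ys'] .
    have yP: "y \<in> pl l D" using pl_M[OF ps] y(1) by blast
    have NP: "ln y s \<subseteq> pl l D" using flat_ln[OF pl_flat[OF ps] yP sP] .
    have NLam: "ln y s \<noteq> Lam"
    proof
      assume eq: "ln y s = Lam"
      have "y \<in> Lam" using eq ln_left[OF yX sX] by simp
      then have "Lam = D" using lines_eq[OF Lam(1) DL _ y(1) ys(1) ys(2) y(3)] by simp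
      then show False using Lam(2) s(2) by simp
    qed
    have "ln y s \<inter> l \<noteq> {}"
      using PFmeet[OF P psD(1)[OF ps] pl_L[OF ps] NL NP ln_right[OF yX sX] sl Lam NLam] .
    then obtain c' where c': "c' \<in> ln y s" "c' \<in> l" by blast
    have c'X: "c' \<in> X" using memX[OF psD(1)[OF ps] c'(2)] .
    have c'm: "c' \<noteq> m"
    proof
      assume cm: "c' = m"
      have mys: "m \<in> ln y s" using c'(1) cm by simp
      have "ln y s = D" using lines_eq[OF NL DL mys mD ln_left[OF yX sX] y(1) not_sym[OF y(2)]] .
      then show False using ln_right[OF yX sX] s(2) by simp
    qed
    have c'y: "c' \<noteq> y" using c'(2) lsub y(1,2) Drho by blast
    have "ln y c' = ln y s" using ln_eq3[OF yX sX c'(1) c'y] .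
    then have "s \<in> ln c' y" using ln_right[OF yX sX] ln_sym by simp
    then show "\<exists>c'\<in>l. c' \<noteq> m \<and> s \<in> ln c' y" using c'(2) c'm by blast
  qed
  then show ?thesis using c l_def by blast
qed

lemma F3: assumes lam: "lam \<in> LL" "lam \<inter> \<rho> = {}" and q: "q \<in> lam" "q \<in> RR \<rho> D"
  and r: "r \<in> lam" "r \<in> RR \<rho> D" and qr: "q \<noteq> r"
  shows "lam \<subseteq> RR \<rho> D"
proof (cases "lam \<inter> D = {}")
  case False
  then obtain y where y: "y \<in> lam" "y \<in> D" by blast
  obtain q' where q': "q' \<in> {q, r}" "q' \<noteq> y" using qr by blast
  have q'R: "q' \<in> RR \<rho> D" using q' q r by blast
  have "ln y q' = lam" using ln_eq[OF lam(1) y(1) _ not_sym[OF q'(2)]] q' q r by blast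
  then show ?thesis using F2[OF y(2) q'R] by simp
next
  case lD: True
  have qD: "q \<notin> D" "q \<notin> \<rho>" using lD lam(2) q(1) by blast+
  have rD: "r \<notin> D" "r \<notin> \<rho>" using lD lam(2) r(1) by blast+
  obtain cq yq where cq: "cq \<in> \<rho>" "cq \<noteq> m" "q \<in> pl (ln m cq) D"
    "\<forall>y\<in>D. y \<noteq> m \<longrightarrow> y \<noteq> yq \<longrightarrow> (\<exists>c'\<in>ln m cq. c' \<noteq> m \<and> q \<in> ln c' y)"
    using ystar[OF q(2) qD] by blast
  obtain cr yr where cr: "cr \<in> \<rho>" "cr \<noteq> m" "r \<in> pl (ln m cr) D"
    "\<forall>y\<in>D. y \<noteq> m \<longrightarrow> y \<noteq> yr \<longrightarrow> (\<exists>c'\<in>ln m cr. c' \<noteq> m \<and> r \<in> ln c' y)"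
    using ystar[OF r(2) rD] by blast
  have cqX: "cq \<in> X" using cq(1) isPlX[OF rho] by blast
  have crX: "cr \<in> X" using cr(1) isPlX[OF rho] by blast
  have qX: "q \<in> X" using memX[OF lam(1) q(1)] .
  have rX: "r \<in> X" using memX[OF lam(1) r(1)] .
  have lamqr: "ln q r = lam" using ln_eq[OF lam(1) q(1) r(1) qr] .
  show ?thesis
  proof (cases "ln m cq = ln m cr")
    case True
    have ps: "ps m (ln m cq) D" using gp(1)[OF cq(1,2)] .
    have "r \<in> pl (ln m cq) D" using cr(3) True by simp
    then have "ln q r \<subseteq> pl (ln m cq) D" using flat_ln[OF pl_flat[OF ps] cq(3)] by blast
    then show ?thesis using lamqr gp(2)[OF cq(1,2)] by blast
  next
    case False
    obtain y0 where y0: "y0 \<in> D" "y0 \<noteq> m" "y0 \<noteq> yq" "y0 \<noteq> yr" using four[OF DL] by blast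
    obtain c1 where c1: "c1 \<in> ln m cq" "c1 \<noteq> m" "q \<in> ln c1 y0" using cq(4) y0 by blast
    obtain c2 where c2: "c2 \<in> ln m cr" "c2 \<noteq> m" "r \<in> ln c2 y0" using cr(4) y0 by blast
    have c1r: "c1 \<in> \<rho>" using flat_ln[OF rflat m cq(1)] c1(1) by blast
    have c2r: "c2 \<in> \<rho>" using flat_ln[OF rflat m cr(1)] c2(1) by blast
    have c1X: "c1 \<in> X" using c1r isPlX[OF rho] by blast
    have c2X: "c2 \<in> X" using c2r isPlX[OF rho] by blast
    have y0X: "y0 \<in> X" using memX[OF DL y0(1)] .
    have y0r: "y0 \<notin> \<rho>" using Drho y0(1,2) by blast
    have c12: "c1 \<noteq> c2"
    proof
      assume "c1 = c2"
      then have "ln m cq = ln m cr"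
        using lines_eq[OF ln_LL[OF mX cqX not_sym[OF cq(2)]] ln_LL[OF mX crX not_sym[OF cr(2)]]
            ln_left[OF mX cqX] ln_left[OF mX crX] c1(1) _ not_sym[OF c1(2)]] c2(1) by simp
      then show False using False by simp
    qed
    have kr: "ln c1 c2 \<subseteq> \<rho>" using flat_ln[OF rflat c1r c2r] .
    have y0k: "y0 \<notin> ln c1 c2" using kr y0r by blast
    define tau where "tau = pl (ln c1 c2) (ln c1 y0)"
    have tP: "isPl tau" using plane3(2)[OF c1X c2X y0X c12 y0k] tau_def by simp
    have c1t: "c1 \<in> tau" using plane3(3)[OF c1X c2X y0X c12 y0k] tau_def by simp
    have c2t: "c2 \<in> tau" using plane3(4)[OF c1X c2X y0X c12 y0k] tau_def by simp
    have y0t: "y0 \<in> tau" using plane3(5)[OF c1X c2X y0X c12 y0k] tau_def by simp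
    have tF: "flat X LL tau" using isPl_flat[OF tP] .
    have qt: "q \<in> tau" using flat_ln[OF tF c1t y0t] c1(3) by blast
    have rt: "r \<in> tau" using flat_ln[OF tF c2t y0t] c2(3) by blast
    have lamt: "lam \<subseteq> tau" using flat_ln[OF tF qt rt] lamqr by simp
    have kL: "ln c1 c2 \<in> LL" using ln_LL[OF c1X c2X c12] .
    have kt: "ln c1 c2 \<subseteq> tau" using flat_ln[OF tF c1t c2t] .
    have lamk: "lam \<inter> ln c1 c2 = {}" using lam(2) kr by blast
    show ?thesis
    proof
      fix t assume t: "t \<in> lam"
      have tX: "t \<in> X" using memX[OF lam(1) t] .
      have tk: "t \<notin> ln c1 c2" using lamk t by blast
      have ty0: "y0 \<noteq> t" using lD t y0(1) by blast
      have NL: "ln y0 t \<in> LL" using ln_LL[OF y0X tX ty0] .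
      have Nt: "ln y0 t \<subseteq> tau" using flat_ln[OF tF y0t] lamt t by blast
      have Nlam: "ln y0 t \<noteq> lam" using ln_left[OF y0X tX] lD y0(1) by blast
      have "ln y0 t \<inter> ln c1 c2 \<noteq> {}"
        using PFmeet[OF tP kL kt NL Nt ln_right[OF y0X tX] tk lam(1) t lamt lamk Nlam] .
      then obtain c where c: "c \<in> ln y0 t" "c \<in> ln c1 c2" by blast
      have cr': "c \<in> \<rho>" using c(2) kr by blast
      have cy: "c \<noteq> y0" using cr' y0r by blast
      have "ln y0 c = ln y0 t" using ln_eq3[OF y0X tX c(1) cy] .
      then have "t \<in> ln c y0" using ln_right[OF y0X tX] ln_sym by simp
      then show "t \<in> RR \<rho> D" using RRI[OF y0(1) cr'] by simp
    qed
  qed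
qed

lemma G: assumes tP: "isPl tau" and p: "p \<in> \<rho>" and tr: "tau \<inter> \<rho> \<subseteq> {p}"
  and A1: "A1 \<in> LL" "A1 \<subseteq> tau" "A1 \<subseteq> RR \<rho> D" and A2: "A2 \<in> LL" "A2 \<subseteq> tau" "A2 \<subseteq> RR \<rho> D"
  and A12: "A1 \<noteq> A2" and y: "y \<in> A1" "y \<in> A2"
  shows "tau \<subseteq> RR \<rho> D"
proof
  fix s assume sT: "s \<in> tau"
  show "s \<in> RR \<rho> D"
  proof (cases "s \<in> A1 \<or> s \<in> A2 \<or> s \<in> \<rho>")
    case True then show ?thesis using A1 A2 rhoR by blast
  next
    case False
    then have sA1: "s \<notin> A1" and sA2: "s \<notin> A2" and sr: "s \<notin> \<rho>" by auto
    have sX: "s \<in> X" using sT isPlX[OF tP] by blast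
    have pX: "p \<in> X" using p isPlX[OF rho] by blast
    have sp: "s \<noteq> p" using sr p by blast
    obtain Lam where Lam: "Lam \<in> LL" "s \<in> Lam" "Lam \<subseteq> tau" "Lam \<inter> A2 = {}"
      using PFex[OF tP A2(1) A2(2) sT sA2] by blast
    have LA1: "A1 \<noteq> Lam" using Lam(2) sA1 by blast
    obtain b1 where b1: "\<forall>x\<in>A1 \<inter> Lam. x = b1" using at_most1[OF A1(1) Lam(1) LA1] by blast
    have spL: "ln s p \<in> LL" using ln_LL[OF sX pX sp] .
    have LA1': "A1 \<noteq> ln s p" using ln_left[OF sX pX] sA1 by blast
    obtain b2 where b2: "\<forall>x\<in>A1 \<inter> ln s p. x = b2" using at_most1[OF A1(1) spL LA1'] by blast
    obtain a where a: "a \<in> A1" "a \<noteq> y" "a \<noteq> b1" "a \<noteq> b2" using four[OF A1(1)] by blast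
    have aX: "a \<in> X" using memX[OF A1(1) a(1)] .
    have aLam: "a \<notin> Lam" using b1 a by blast
    have asp: "a \<notin> ln s p" using b2 a by blast
    have aA2: "a \<notin> A2" using le1[OF A1(1) A2(1) A12 a(1) _ y] a(2) by blast
    have as: "s \<noteq> a" using a(1) sA1 by blast
    have muL: "ln s a \<in> LL" using ln_LL[OF sX aX as] .
    have muT: "ln s a \<subseteq> tau" using flat_ln[OF isPl_flat[OF tP] sT] A1(2) a(1) by blast
    have muLam: "ln s a \<noteq> Lam" using ln_right[OF sX aX] aLam by blast
    have "ln s a \<inter> A2 \<noteq> {}"
      using PFmeet[OF tP A2(1) A2(2) muL muT ln_left[OF sX aX] sA2 Lam muLam] .
    then obtain a2 where a2: "a2 \<in> ln s a" "a2 \<in> A2" by blast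
    have aa2: "a \<noteq> a2" using a2(2) aA2 by blast
    have mur: "ln s a \<inter> \<rho> = {}"
    proof (rule ccontr)
      assume "ln s a \<inter> \<rho> \<noteq> {}"
      then obtain x where x: "x \<in> ln s a" "x \<in> \<rho>" by blast
      have "x = p" using tr x muT by blast
      then have "ln s p = ln s a" using ln_eq3[OF sX aX] x(1) sp by metis
      then show False using asp ln_right[OF sX aX] by simp
    qed
    have "ln s a \<subseteq> RR \<rho> D"
      using F3[OF muL mur ln_right[OF sX aX] _ a2(1) _ aa2] A1(3) a(1) A2(3) a2(2) by blast
    then show ?thesis using ln_left[OF sX aX] by blast
  qed
qed

context
  fixes q0 w t
  assumes q0: "q0 \<in> RR \<rho> D" "q0 \<notin> \<rho>" and w: "w \<in> \<rho>" and wq: "w \<noteq> q0"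
    and t: "t \<in> ln w q0" "t \<notin> RR \<rho> D" and lD: "ln w q0 \<inter> D = {}"
begin

lemma wX: "w \<in> X" using w isPlX[OF rho] by blast
lemma q0X: "q0 \<in> X" using q0(1) RX by blast
lemma tX: "t \<in> X" using ln_memX[OF wX q0X t(1)] .
lemma tr: "t \<notin> \<rho>" using t(2) rhoR by blast
lemma tD: "t \<notin> D" using t(2) DR by blast
lemma q0D: "q0 \<notin> D" using lD ln_right[OF wX q0X] by blast

lemma Om: "ps m D (ln m t)" "isPl (pl D (ln m t))" "m \<in> pl D (ln m t)" "t \<in> pl D (ln m t)"
  "D \<subseteq> pl D (ln m t)"
proof -
  have tmn: "t \<notin> ln m n" using tD D by simp
  show ps: "ps m D (ln m t)" using plane3(1)[OF mX nX tX mn tmn] D by simp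
  show "isPl (pl D (ln m t))" using plane3(2)[OF mX nX tX mn tmn] D by simp
  show "m \<in> pl D (ln m t)" using plane3(3)[OF mX nX tX mn tmn] D by simp
  show "t \<in> pl D (ln m t)" using plane3(5)[OF mX nX tX mn tmn] D by simp
  show "D \<subseteq> pl D (ln m t)" using pl_L[OF ps] .
qed

lemma Omr: assumes c: "c \<in> pl D (ln m t)" "c \<in> \<rho>" shows "c = m"
proof (rule ccontr)
  assume cm: "c \<noteq> m"
  have cX: "c \<in> X" using c(2) isPlX[OF rho] by blast
  have cD: "c \<notin> D" using Drho c(2) cm by blast
  have lL: "ln m c \<in> LL" using ln_LL[OF mX cX not_sym[OF cm]] .
  have lO: "ln m c \<subseteq> pl D (ln m t)" using flat_ln[OF isPl_flat[OF Om(2)] Om(3) c(1)] .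
  have ne: "ln m c \<noteq> D" using cD ln_right[OF mX cX] by blast
  have "pl D (ln m t) = pl (ln m c) D"
    using BaseAny(2)[OF Om(2) lL lO DL Om(5) ne ln_left[OF mX cX] mD] .
  then have "t \<in> RR \<rho> D" using Om(4) gp(2)[OF c(2) cm] by blast
  then show False using t(2) by simp
qed

lemma T3: assumes y: "y \<in> D" "y \<noteq> m" shows "ln y t \<inter> \<rho> = {}"
proof (rule ccontr)
  assume "ln y t \<inter> \<rho> \<noteq> {}"
  then obtain c where c: "c \<in> ln y t" "c \<in> \<rho>" by blast
  have yX: "y \<in> X" using memX[OF DL y(1)] .
  have cy: "c \<noteq> y" using Drho y c(2) by blast
  have "ln y c = ln y t" using ln_eq3[OF yX tX c(1) cy] .
  then have "t \<in> ln c y" using ln_right[OF yX tX] ln_sym by simp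
  then show False using RRI[OF y(1) c(2)] t(2) by simp
qed

lemma tau: assumes y: "y \<in> D" "y \<noteq> m"
  shows "isPl (pl (ln w q0) (ln w y))" "w \<in> pl (ln w q0) (ln w y)" "q0 \<in> pl (ln w q0) (ln w y)"
    "y \<in> pl (ln w q0) (ln w y)" "t \<in> pl (ln w q0) (ln w y)"
proof -
  have yX: "y \<in> X" using memX[OF DL y(1)] .
  have yl: "y \<notin> ln w q0" using lD y(1) by blast
  show "isPl (pl (ln w q0) (ln w y))" using plane3(2)[OF wX q0X yX wq yl] .
  show "w \<in> pl (ln w q0) (ln w y)" using plane3(3)[OF wX q0X yX wq yl] .
  show "q0 \<in> pl (ln w q0) (ln w y)" using plane3(4)[OF wX q0X yX wq yl] .
  show "y \<in> pl (ln w q0) (ln w y)" using plane3(5)[OF wX q0X yX wq yl] .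
  show "t \<in> pl (ln w q0) (ln w y)" using pl_L[OF plane3(1)[OF wX q0X yX wq yl]] t(1) by blast
qed

lemma T1: assumes y: "y \<in> D" "y \<noteq> m" shows "m \<notin> pl (ln w q0) (ln w y)"
proof
  assume mt: "m \<in> pl (ln w q0) (ln w y)"
  have yX: "y \<in> X" using memX[OF DL y(1)] .
  have F: "flat X LL (pl (ln w q0) (ln w y))" using isPl_flat[OF tau(1)[OF y]] .
  have "ln m y = D" using ln_eq[OF DL mD y(1) not_sym[OF y(2)]] .
  then have Dt: "D \<subseteq> pl (ln w q0) (ln w y)" using flat_ln[OF F mt tau(4)[OF y]] by simp
  have wm: "w \<noteq> m" using lD ln_left[OF wX q0X] mD by blast
  have wD: "w \<notin> D" using lD ln_left[OF wX q0X] by blast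
  have lL: "ln m w \<in> LL" using ln_LL[OF mX wX not_sym[OF wm]] .
  have lt: "ln m w \<subseteq> pl (ln w q0) (ln w y)" using flat_ln[OF F mt tau(2)[OF y]] .
  have ne: "ln m w \<noteq> D" using wD ln_right[OF mX wX] by blast
  have "pl (ln w q0) (ln w y) = pl (ln m w) D"
    using BaseAny(2)[OF tau(1)[OF y] lL lt DL Dt ne ln_left[OF mX wX] mD] .
  then have "t \<in> RR \<rho> D" using tau(5)[OF y] gp(2)[OF w wm] by blast
  then show False using t(2) by simp
qed

lemma T2: assumes y: "y \<in> D" "y \<noteq> m"
  shows "\<exists>c. c \<in> pl (ln w q0) (ln w y) \<and> c \<in> \<rho> \<and> c \<noteq> w"
proof (rule ccontr)
  assume "\<not> ?thesis"
  then have sub: "pl (ln w q0) (ln w y) \<inter> \<rho> \<subseteq> {w}" by blast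
  have yX: "y \<in> X" using memX[OF DL y(1)] .
  have F: "flat X LL (pl (ln w q0) (ln w y))" using isPl_flat[OF tau(1)[OF y]] .
  have yw: "y \<noteq> w" using Drho y w by blast
  have yq: "y \<noteq> q0" using q0D y(1) by blast
  have A1L: "ln y w \<in> LL" using ln_LL[OF yX wX yw] .
  have A2L: "ln y q0 \<in> LL" using ln_LL[OF yX q0X yq] .
  have A1t: "ln y w \<subseteq> pl (ln w q0) (ln w y)" using flat_ln[OF F tau(4)[OF y] tau(2)[OF y]] .
  have A2t: "ln y q0 \<subseteq> pl (ln w q0) (ln w y)" using flat_ln[OF F tau(4)[OF y] tau(3)[OF y]] .
  have A1R: "ln y w \<subseteq> RR \<rho> D" using F2[OF y(1)] rhoR w by blast
  have A2R: "ln y q0 \<subseteq> RR \<rho> D" using F2[OF y(1) q0(1)] .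
  have A12: "ln y w \<noteq> ln y q0"
  proof
    assume eq: "ln y w = ln y q0"
    have "q0 \<in> ln y w" using eq ln_right[OF yX q0X] by simp
    then have "ln w q0 = ln y w" using ln_eq2[OF yX wX ln_right[OF yX wX] _ wq] by simp
    then show False using lD ln_left[OF yX wX] y(1) by blast
  qed
  have "pl (ln w q0) (ln w y) \<subseteq> RR \<rho> D"
    using G[OF tau(1)[OF y] w sub A1L A1t A1R A2L A2t A2R A12 ln_left[OF yX wX] ln_left[OF yX q0X]] .
  then show False using tau(5)[OF y] t(2) by blast
qed

lemma bad: False
proof -
  obtain y1 where y1: "y1 \<in> D" "y1 \<noteq> m" using other_pt[OF DL] by blast
  obtain y2 where y2: "y2 \<in> D" "y2 \<noteq> m" "y2 \<noteq> y1" using four[OF DL] by blast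
  have y1X: "y1 \<in> X" using memX[OF DL y1(1)] .
  have y2X: "y2 \<in> X" using memX[OF DL y2(1)] .
  define tau2 where "tau2 = pl (ln w q0) (ln w y2)"
  have t2P: "isPl tau2" using tau(1)[OF y2(1,2)] tau2_def by simp
  have t2F: "flat X LL tau2" using isPl_flat[OF t2P] .
  have wt2: "w \<in> tau2" using tau(2)[OF y2(1,2)] tau2_def by simp
  have tt2: "t \<in> tau2" using tau(5)[OF y2(1,2)] tau2_def by simp
  have y2t2: "y2 \<in> tau2" using tau(4)[OF y2(1,2)] tau2_def by simp
  have y1t2: "y1 \<notin> tau2"
  proof
    assume y1t: "y1 \<in> tau2"
    have "ln y1 y2 = D" using ln_eq[OF DL y1(1) y2(1) not_sym[OF y2(3)]] .
    then have "m \<in> tau2" using flat_ln[OF t2F y1t y2t2] mD by blast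
    then show False using T1[OF y2(1,2)] tau2_def by simp
  qed
  obtain c2 where c2: "c2 \<in> tau2" "c2 \<in> \<rho>" "c2 \<noteq> w" using T2[OF y2(1,2)] tau2_def by blast
  have c2X: "c2 \<in> X" using c2(2) isPlX[OF rho] by blast
  define k2 where "k2 = ln w c2"
  have k2L: "k2 \<in> LL" using ln_LL[OF wX c2X not_sym[OF c2(3)]] k2_def by simp
  have t2r: "tau2 \<noteq> \<rho>" using y2t2 Drho y2 by blast
  have k2eq: "tau2 \<inter> \<rho> = k2" using plane_int[OF t2P rho t2r wt2 w c2(1) c2(2) not_sym[OF c2(3)]] k2_def by simp
  have k2r: "k2 \<subseteq> \<rho>" using k2eq by blast
  have k2t: "k2 \<subseteq> tau2" using k2eq by blast
  have wk2: "w \<in> k2" using wt2 w k2eq by blast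
  have E1r: "ln y1 t \<inter> \<rho> = {}" using T3[OF y1] .
  have E2r: "ln y2 t \<inter> \<rho> = {}" using T3[OF y2(1,2)] .
  have ty1: "y1 \<noteq> t" using y1(1) tD by blast
  have ty2: "y2 \<noteq> t" using y2(1) tD by blast
  have S: "\<And>p s. p \<in> k2 \<Longrightarrow> s \<in> ln t p \<Longrightarrow> s \<noteq> t \<Longrightarrow> s \<in> RR \<rho> D"
  proof (rule ccontr)
    fix p s assume p: "p \<in> k2" and s: "s \<in> ln t p" and st: "s \<noteq> t" and sR: "s \<notin> RR \<rho> D"
    have pr: "p \<in> \<rho>" using p k2r by blast
    have pX: "p \<in> X" using pr isPlX[OF rho] by blast
    have tp: "t \<noteq> p" using pr tr by blast
    have pt2: "p \<in> tau2" using p k2t by blast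
    have sX: "s \<in> X" using ln_memX[OF tX pX s] .
    have st2: "s \<in> tau2" using flat_ln[OF t2F tt2 pt2] s by blast
    have sy2: "y2 \<noteq> s" using sR DR y2(1) by blast
    have sr: "ln y2 s \<inter> \<rho> = {}"
    proof (rule ccontr)
      assume "ln y2 s \<inter> \<rho> \<noteq> {}"
      then obtain c where c: "c \<in> ln y2 s" "c \<in> \<rho>" by blast
      have cy: "c \<noteq> y2" using Drho y2 c(2) by blast
      have "ln y2 c = ln y2 s" using ln_eq3[OF y2X sX c(1) cy] .
      then have "s \<in> ln c y2" using ln_right[OF y2X sX] ln_sym by simp
      then show False using RRI[OF y2(1) c(2)] sR by simp
    qed
    have y2k2: "y2 \<notin> k2" using k2r Drho y2 by blast
    have e: "ln y2 s = ln y2 t"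
      using PFuniq[OF t2P k2L k2t y2k2 ln_LL[OF y2X sX sy2] ln_left[OF y2X sX]
          flat_ln[OF t2F y2t2 st2] _ ln_LL[OF y2X tX ty2] ln_left[OF y2X tX] flat_ln[OF t2F y2t2 tt2]]
        sr E2r k2r by blast
    have sE2: "s \<in> ln y2 t" using e ln_right[OF y2X sX] by simp
    have ne: "ln t p \<noteq> ln y2 t" using ln_right[OF tX pX] pr E2r by blast
    have "s = t" using le1[OF ln_LL[OF tX pX tp] ln_LL[OF y2X tX ty2] ne s sE2 ln_left[OF tX pX] ln_right[OF y2X tX]] .
    then show False using st by simp
  qed
  have PL1: "\<And>p. p \<in> k2 \<Longrightarrow> ps t (ln t p) (ln t y1) \<and> isPl (pl (ln t p) (ln t y1)) \<and> t \<in> pl (ln t p) (ln t y1)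
      \<and> p \<in> pl (ln t p) (ln t y1) \<and> y1 \<in> pl (ln t p) (ln t y1)"
  proof -
    fix p assume p: "p \<in> k2"
    have pr: "p \<in> \<rho>" using p k2r by blast
    have pX: "p \<in> X" using pr isPlX[OF rho] by blast
    have tp: "t \<noteq> p" using pr tr by blast
    have "ln t p \<subseteq> tau2" using flat_ln[OF t2F tt2] p k2t by blast
    then have y1l: "y1 \<notin> ln t p" using y1t2 by blast
    show "ps t (ln t p) (ln t y1) \<and> isPl (pl (ln t p) (ln t y1)) \<and> t \<in> pl (ln t p) (ln t y1)
      \<and> p \<in> pl (ln t p) (ln t y1) \<and> y1 \<in> pl (ln t p) (ln t y1)"
      using plane3[OF tX pX y1X tp y1l] by blast
  qed
  have PL2: "\<And>p. p \<in> k2 \<Longrightarrow> \<exists>c. c \<in> pl (ln t p) (ln t y1) \<and> c \<in> \<rho> \<and> c \<noteq> p"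
  proof (rule ccontr)
    fix p assume p: "p \<in> k2" and nc: "\<not> (\<exists>c. c \<in> pl (ln t p) (ln t y1) \<and> c \<in> \<rho> \<and> c \<noteq> p)"
    then have sub: "pl (ln t p) (ln t y1) \<inter> \<rho> \<subseteq> {p}" by blast
    have pr: "p \<in> \<rho>" using p k2r by blast
    have pX: "p \<in> X" using pr isPlX[OF rho] by blast
    have tp: "t \<noteq> p" using pr tr by blast
    have P: "isPl (pl (ln t p) (ln t y1))" using PL1[OF p] by blast
    have F: "flat X LL (pl (ln t p) (ln t y1))" using isPl_flat[OF P] .
    have y1P: "y1 \<in> pl (ln t p) (ln t y1)" using PL1[OF p] by blast
    have pP: "p \<in> pl (ln t p) (ln t y1)" using PL1[OF p] by blast
    have tP: "t \<in> pl (ln t p) (ln t y1)" using PL1[OF p] by blast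
    obtain s where s: "s \<in> ln t p" "s \<noteq> t" "s \<noteq> p" using four_ln[OF tX pX tp] by blast
    have sX: "s \<in> X" using ln_memX[OF tX pX s(1)] .
    have sR: "s \<in> RR \<rho> D" using S[OF p s(1) s(2)] .
    have sP: "s \<in> pl (ln t p) (ln t y1)" using flat_ln[OF F tP pP] s(1) by blast
    have "ln t p \<subseteq> tau2" using flat_ln[OF t2F tt2] p k2t by blast
    then have y1l: "y1 \<notin> ln t p" using y1t2 by blast
    have y1p: "y1 \<noteq> p" using Drho y1 pr by blast
    have y1s: "y1 \<noteq> s" using y1l s(1) by blast
    have A1L: "ln y1 p \<in> LL" using ln_LL[OF y1X pX y1p] .
    have A2L: "ln y1 s \<in> LL" using ln_LL[OF y1X sX y1s] .
    have A1t: "ln y1 p \<subseteq> pl (ln t p) (ln t y1)" using flat_ln[OF F y1P pP] .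
    have A2t: "ln y1 s \<subseteq> pl (ln t p) (ln t y1)" using flat_ln[OF F y1P sP] .
    have A1R: "ln y1 p \<subseteq> RR \<rho> D" using F2[OF y1(1)] rhoR pr by blast
    have A2R: "ln y1 s \<subseteq> RR \<rho> D" using F2[OF y1(1) sR] .
    have A12: "ln y1 p \<noteq> ln y1 s"
    proof
      assume eq: "ln y1 p = ln y1 s"
      have sl: "s \<in> ln y1 p" using eq ln_right[OF y1X sX] by simp
      have "ln t p = ln y1 p"
        using lines_eq[OF ln_LL[OF tX pX tp] A1L s(1) sl ln_right[OF tX pX] ln_right[OF y1X pX] s(3)] .
      then show False using y1l ln_left[OF y1X pX] by simp
    qed
    have "pl (ln t p) (ln t y1) \<subseteq> RR \<rho> D"
      using G[OF P pr sub A1L A1t A1R A2L A2t A2R A12 ln_left[OF y1X pX] ln_left[OF y1X sX]] .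
    then show False using tP t(2) by blast
  qed
  have KL: "\<And>p. p \<in> k2 \<Longrightarrow> pl (ln t p) (ln t y1) \<inter> \<rho> \<in> LL \<and> p \<in> pl (ln t p) (ln t y1) \<inter> \<rho>"
  proof -
    fix p assume p: "p \<in> k2"
    have pr: "p \<in> \<rho>" using p k2r by blast
    obtain c where c: "c \<in> pl (ln t p) (ln t y1)" "c \<in> \<rho>" "c \<noteq> p" using PL2[OF p] by blast
    have P: "isPl (pl (ln t p) (ln t y1))" using PL1[OF p] by blast
    have pP: "p \<in> pl (ln t p) (ln t y1)" using PL1[OF p] by blast
    have tP: "t \<in> pl (ln t p) (ln t y1)" using PL1[OF p] by blast
    have ne: "pl (ln t p) (ln t y1) \<noteq> \<rho>" using tP tr by blast
    have pX: "p \<in> X" using pr isPlX[OF rho] by blast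
    have cX: "c \<in> X" using c(2) isPlX[OF rho] by blast
    have "pl (ln t p) (ln t y1) \<inter> \<rho> = ln p c" using plane_int[OF P rho ne pP pr c(1) c(2) not_sym[OF c(3)]] .
    then show "pl (ln t p) (ln t y1) \<inter> \<rho> \<in> LL \<and> p \<in> pl (ln t p) (ln t y1) \<inter> \<rho>"
      using ln_LL[OF pX cX not_sym[OF c(3)]] pP pr ln_left[OF pX cX] by simp
  qed
  have K2: "\<And>p. p \<in> k2 \<Longrightarrow> pl (ln t p) (ln t y1) \<inter> \<rho> \<noteq> k2"
  proof
    fix p assume p: "p \<in> k2" and eq: "pl (ln t p) (ln t y1) \<inter> \<rho> = k2"
    have P: "isPl (pl (ln t p) (ln t y1))" using PL1[OF p] by blast
    have tP: "t \<in> pl (ln t p) (ln t y1)" using PL1[OF p] by blast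
    have c2k2: "c2 \<in> k2" using k2eq c2 by blast
    have tk: "t \<notin> ln w c2" using k2_def k2r tr by blast
    have "pl (ln t p) (ln t y1) = tau2"
      using plane_eq[OF P t2P _ wt2 _ c2(1) tP tt2 not_sym[OF c2(3)] tk] eq wk2 c2k2 by blast
    then show False using PL1[OF p] y1t2 by blast
  qed
  have K3: "\<And>p p'. p \<in> k2 \<Longrightarrow> p' \<in> k2 \<Longrightarrow> p \<noteq> p' \<Longrightarrow>
      (pl (ln t p) (ln t y1) \<inter> \<rho>) \<inter> (pl (ln t p') (ln t y1) \<inter> \<rho>) = {}"
  proof (rule ccontr)
    fix p p' assume p: "p \<in> k2" and p': "p' \<in> k2" and pp: "p \<noteq> p'"
      and ne: "(pl (ln t p) (ln t y1) \<inter> \<rho>) \<inter> (pl (ln t p') (ln t y1) \<inter> \<rho>) \<noteq> {}"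
    then obtain z where z: "z \<in> pl (ln t p) (ln t y1)" "z \<in> pl (ln t p') (ln t y1)" "z \<in> \<rho>" by blast
    have P: "isPl (pl (ln t p) (ln t y1))" using PL1[OF p] by blast
    have P': "isPl (pl (ln t p') (ln t y1))" using PL1[OF p'] by blast
    have zE: "z \<notin> ln y1 t" using E1r z(3) by blast
    have "pl (ln t p) (ln t y1) = pl (ln t p') (ln t y1)"
      using plane_eq[OF P P' _ _ _ _ z(1) z(2) ty1 zE] PL1[OF p] PL1[OF p'] by blast
    then have eq: "pl (ln t p) (ln t y1) \<inter> \<rho> = pl (ln t p') (ln t y1) \<inter> \<rho>" by simp
    have pr: "p \<in> \<rho>" using p k2r by blast
    have p'r: "p' \<in> \<rho>" using p' k2r by blast
    have a: "p \<in> pl (ln t p) (ln t y1) \<inter> \<rho>" using KL[OF p] by blast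
    have b: "p' \<in> pl (ln t p) (ln t y1) \<inter> \<rho>" using KL[OF p'] eq by blast
    have "pl (ln t p) (ln t y1) \<inter> \<rho> = k2" using lines_eq[OF _ k2L a p b p' pp] KL[OF p] by blast
    then show False using K2[OF p] by simp
  qed
  have K4: "\<And>p. p \<in> k2 \<Longrightarrow> m \<notin> pl (ln t p) (ln t y1) \<inter> \<rho>"
  proof
    fix p assume p: "p \<in> k2" and mK: "m \<in> pl (ln t p) (ln t y1) \<inter> \<rho>"
    have P: "isPl (pl (ln t p) (ln t y1))" using PL1[OF p] by blast
    have my1: "m \<noteq> y1" using y1(2) by simp
    have tD': "t \<notin> ln m y1" using ln_eq[OF DL mD y1(1) my1] tD by simp
    have "pl (ln t p) (ln t y1) = pl D (ln m t)"
      using plane_eq[OF P Om(2) _ Om(3) _ _ _ Om(4) my1 tD'] mK PL1[OF p] Om(5) y1(1) by blast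
    then have sub: "pl (ln t p) (ln t y1) \<inter> \<rho> \<subseteq> {m}" using Omr by blast
    obtain x where x: "x \<in> pl (ln t p) (ln t y1) \<inter> \<rho>" "x \<noteq> m" using other_pt KL[OF p] by blast
    then show False using sub by blast
  qed
  define Kw where "Kw = pl (ln t w) (ln t y1) \<inter> \<rho>"
  have KwL: "Kw \<in> LL" using KL[OF wk2] Kw_def by simp
  have wKw: "w \<in> Kw" using KL[OF wk2] Kw_def by simp
  have Kwr: "Kw \<subseteq> \<rho>" using Kw_def by blast
  have mKw: "m \<notin> Kw" using K4[OF wk2] Kw_def by simp
  obtain K'' where K'': "K'' \<in> LL" "m \<in> K''" "K'' \<subseteq> \<rho>" "K'' \<inter> Kw = {}"
    using PFex[OF rho KwL Kwr m mKw] by blast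
  have wK'': "w \<notin> K''" using K''(4) wKw by blast
  have k2Kw: "k2 \<noteq> Kw" using K2[OF wk2] Kw_def by simp
  have "k2 \<inter> K'' \<noteq> {}"
    using PFmeet[OF rho K''(1) K''(3) k2L k2r wk2 wK'' KwL wKw Kwr _ k2Kw] K''(4) by blast
  then obtain p1 where p1: "p1 \<in> k2" "p1 \<in> K''" by blast
  have p1w: "p1 \<noteq> w" using p1(2) wK'' by blast
  have disj: "(pl (ln t p1) (ln t y1) \<inter> \<rho>) \<inter> Kw = {}" using K3[OF p1(1) wk2 p1w] Kw_def by simp
  have p1Kw: "p1 \<notin> Kw" using disj KL[OF p1(1)] by blast
  have "pl (ln t p1) (ln t y1) \<inter> \<rho> = K''"
    using PFuniq[OF rho KwL Kwr p1Kw _ _ _ disj K''(1) p1(2) K''(3) K''(4)] KL[OF p1(1)] by blast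
  then show False using K4[OF p1(1)] K''(2) by simp
qed

end

lemma Reg3: assumes q: "q \<in> RR \<rho> D" and r: "r \<in> RR \<rho> D" and qr: "q \<noteq> r" and t: "t \<in> ln q r"
  shows "t \<in> RR \<rho> D"
proof (rule ccontr)
  assume tR: "t \<notin> RR \<rho> D"
  have qX: "q \<in> X" using q RX by blast
  have rX: "r \<in> X" using r RX by blast
  have lL: "ln q r \<in> LL" using ln_LL[OF qX rX qr] .
  have tr': "t \<notin> \<rho>" using tR rhoR by blast
  show False
  proof (cases "ln q r \<inter> \<rho> = {}")
    case True
    have "ln q r \<subseteq> RR \<rho> D" using F3[OF lL True ln_left[OF qX rX] q ln_right[OF qX rX] r qr] .
    then show False using t tR by blast
  next
    case False
    show False
    proof (cases "ln q r \<inter> D = {}")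
      case False
      then obtain y where y: "y \<in> ln q r" "y \<in> D" by blast
      obtain q' where q': "q' \<in> {q, r}" "q' \<noteq> y" using qr by blast
      have q'R: "q' \<in> RR \<rho> D" using q' q r by blast
      have q'l: "q' \<in> ln q r" using q'(1) ln_left[OF qX rX] ln_right[OF qX rX] by blast
      have "ln y q' = ln q r" using ln_eq[OF lL y(1) q'l not_sym[OF q'(2)]] .
      then show False using F2[OF y(2) q'R] t tR by blast
    next
      case lD: True
      obtain w where w: "w \<in> ln q r" "w \<in> \<rho>" using False by blast
      obtain q0 where q0: "q0 \<in> {q, r}" "q0 \<noteq> w" using qr by blast
      have q0R: "q0 \<in> RR \<rho> D" using q0 q r by blast
      have q0l: "q0 \<in> ln q r" using q0(1) ln_left[OF qX rX] ln_right[OF qX rX] by blast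
      have eq: "ln w q0 = ln q r" using ln_eq[OF lL w(1) q0l q0(2)[symmetric]] by simp
      have wX: "w \<in> X" using w(2) isPlX[OF rho] by blast
      have q0X: "q0 \<in> X" using q0R RX by blast
      have q0r: "q0 \<notin> \<rho>"
      proof
        assume "q0 \<in> \<rho>"
        then have "ln w q0 \<subseteq> \<rho>" using flat_ln[OF rflat w(2)] by blast
        then show False using eq t tr' by blast
      qed
      show False using bad[OF q0R q0r w(2) q0(2)[symmetric] _ tR] eq t lD by simp
    qed
  qed
qed

end
end


context AL begin

lemma X_flat: "flat X LL X"
  unfolding flat_def using lnX by blast

lemma hull_flat: assumes "S \<subseteq> X" shows "flat X LL (hull X LL S)"
proof -
  have fam: "X \<in> {F. flat X LL F \<and> S \<subseteq> F}" using X_flat assms by blast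
  have sub: "hull X LL S \<subseteq> X" unfolding hull_def using fam by blast
  have "\<forall>x\<in>hull X LL S. \<forall>y\<in>hull X LL S. x \<noteq> y \<longrightarrow> ln x y \<subseteq> hull X LL S"
  proof (intro ballI impI)
    fix x y assume xy: "x \<in> hull X LL S" "y \<in> hull X LL S" "x \<noteq> y"
    show "ln x y \<subseteq> hull X LL S" unfolding hull_def
    proof (rule Inter_greatest)
      fix F assume F: "F \<in> {F. flat X LL F \<and> S \<subseteq> F}"
      then have "x \<in> F" "y \<in> F" using xy unfolding hull_def by blast+
      then show "ln x y \<subseteq> F" using F xy(3) unfolding flat_def by blast
    qed
  qed
  then show ?thesis using sub unfolding flat_def by blast
qed

lemma hull_min: "flat X LL F \<Longrightarrow> S \<subseteq> F \<Longrightarrow> hull X LL S \<subseteq> F"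
  unfolding hull_def by blast

lemma hull_sub: "S \<subseteq> hull X LL S"
  unfolding hull_def by blast

lemma RR_mono: "A \<subseteq> B \<Longrightarrow> RR A D \<subseteq> RR B D"
  unfolding RR_def by blast

lemma RA_closed: assumes A: "flat X LL A" and a: "a \<in> A" and b: "b \<in> X" "b \<notin> A"
  and q: "q \<in> RR A (ln a b)" and r: "r \<in> RR A (ln a b)" and qr: "q \<noteq> r" and t: "t \<in> ln q r"
  shows "t \<in> RR A (ln a b)"
proof -
  have AX: "A \<subseteq> X" using A unfolding flat_def by blast
  have aX: "a \<in> X" using a AX by blast
  have ab: "a \<noteq> b" using a b by blast
  define D where "D = ln a b"
  have DL: "D \<in> LL" using ln_LL[OF aX b(1) ab] D_def by simp
  have aD: "a \<in> D" using ln_left[OF aX b(1)] D_def by simp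
  have bD: "b \<in> D" using ln_right[OF aX b(1)] D_def by simp
  obtain y1 a1 where ya1: "y1 \<in> D" "a1 \<in> A" "q \<in> ln a1 y1" using q D_def unfolding RR_def by blast
  obtain y2 a2 where ya2: "y2 \<in> D" "a2 \<in> A" "r \<in> ln a2 y2" using r D_def unfolding RR_def by blast
  have a1X: "a1 \<in> X" using ya1(2) AX by blast
  have a2X: "a2 \<in> X" using ya2(2) AX by blast
  have qX: "q \<in> X" using ln_memX[OF a1X memX[OF DL ya1(1)] ya1(3)] .
  have rX: "r \<in> X" using ln_memX[OF a2X memX[OF DL ya2(1)] ya2(3)] .
  consider (CA) "a1 = a" "a2 = a" | (CB) "\<exists>c\<in>LL. a \<in> c \<and> a1 \<in> c \<and> a2 \<in> c \<and> c \<subseteq> A"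
    | (CC) "a1 \<noteq> a" "a2 \<notin> ln a a1"
  proof (cases "a1 = a")
    case True
    show thesis
    proof (cases "a2 = a")
      case True then show thesis using that(1) \<open>a1 = a\<close> by blast
    next
      case False
      have "ln a a2 \<in> LL" using ln_LL[OF aX a2X not_sym[OF False]] .
      moreover have "ln a a2 \<subseteq> A" using flat_ln[OF A a ya2(2)] .
      ultimately show thesis using that(2) True ln_left[OF aX a2X] ln_right[OF aX a2X] by blast
    qed
  next
    case False
    show thesis
    proof (cases "a2 \<in> ln a a1")
      case True
      have "ln a a1 \<in> LL" using ln_LL[OF aX a1X not_sym[OF False]] .
      moreover have "ln a a1 \<subseteq> A" using flat_ln[OF A a ya1(2)] .
      ultimately show thesis using that(2) True ln_left[OF aX a1X] ln_right[OF aX a1X] by blast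
    next
      case F2: False
      then show thesis using that(3) False by blast
    qed
  qed
  then show ?thesis
  proof cases
    case CA
    have "q \<in> D" using ya1 CA ln_subL[OF DL aD ya1(1)] by blast
    moreover have "r \<in> D" using ya2 CA ln_subL[OF DL aD ya2(1)] by blast
    ultimately have "ln q r = D" using ln_eq[OF DL _ _ qr] by blast
    then have tD: "t \<in> D" using t by simp
    have "t \<in> ln a t" using ln_right[OF aX memX[OF DL tD]] .
    then show ?thesis using RRI[OF tD[unfolded D_def] a] by simp
  next
    case CB
    then obtain c where c: "c \<in> LL" "a \<in> c" "a1 \<in> c" "a2 \<in> c" "c \<subseteq> A" by blast
    have cD: "c \<noteq> D" using bD b(2) c(5) by blast
    have ps: "ps a c D" unfolding ps_def using c DL cD aD by blast
    have qP: "q \<in> pl c D" using plI[OF c(3) ya1(1) ya1(3)] .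
    have rP: "r \<in> pl c D" using plI[OF c(4) ya2(1) ya2(3)] .
    have "ln q r \<subseteq> pl c D" using flat_ln[OF pl_flat[OF ps] qP rP] .
    then have tP: "t \<in> pl c D" using t by blast
    then obtain w v where wv: "w \<in> c" "v \<in> D" "t \<in> ln w v" unfolding pl_def by blast
    then show ?thesis using RRI[of v "ln a b" w A t] c(5) D_def by blast
  next
    case CC
    have ps: "ps a (ln a a1) (ln a a2)" using plane3(1)[OF aX a1X a2X not_sym[OF CC(1)] CC(2)] .
    have rho: "isPl (pl (ln a a1) (ln a a2))" using plane3(2)[OF aX a1X a2X not_sym[OF CC(1)] CC(2)] .
    have arho: "a \<in> pl (ln a a1) (ln a a2)" using plane3(3)[OF aX a1X a2X not_sym[OF CC(1)] CC(2)] .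
    have a1rho: "a1 \<in> pl (ln a a1) (ln a a2)" using plane3(4)[OF aX a1X a2X not_sym[OF CC(1)] CC(2)] .
    have a2rho: "a2 \<in> pl (ln a a1) (ln a a2)" using plane3(5)[OF aX a1X a2X not_sym[OF CC(1)] CC(2)] .
    have rhoA: "pl (ln a a1) (ln a a2) \<subseteq> A"
      using pl_in_flat[OF A flat_ln[OF A a ya1(2)] flat_ln[OF A a ya2(2)]] .
    have brho: "b \<notin> pl (ln a a1) (ln a a2)" using rhoA b(2) by blast
    have q': "q \<in> RR (pl (ln a a1) (ln a a2)) D" using RRI[OF ya1(1) a1rho ya1(3)] .
    have r': "r \<in> RR (pl (ln a a1) (ln a a2)) D" using RRI[OF ya2(1) a2rho ya2(3)] .
    have "t \<in> RR (pl (ln a a1) (ln a a2)) D" using Reg3[OF rho arho b(1) brho D_def q' r' qr t] .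
    then show ?thesis using RR_mono[OF rhoA] D_def by blast
  qed
qed

lemma RA_flat: assumes A: "flat X LL A" and a: "a \<in> A" and b: "b \<in> X" "b \<notin> A"
  shows "flat X LL (RR A (ln a b))"
proof -
  have AX: "A \<subseteq> X" using A unfolding flat_def by blast
  have aX: "a \<in> X" using a AX by blast
  have sub: "RR A (ln a b) \<subseteq> X"
  proof
    fix s assume "s \<in> RR A (ln a b)"
    then obtain y c where "y \<in> ln a b" "c \<in> A" "s \<in> ln c y" unfolding RR_def by blast
    then show "s \<in> X" using ln_memX[OF _ ln_memX[OF aX b(1)]] AX by blast
  qed
  have "\<forall>q\<in>RR A (ln a b). \<forall>r\<in>RR A (ln a b). q \<noteq> r \<longrightarrow> ln q r \<subseteq> RR A (ln a b)"
    using RA_closed[OF A a b] by blast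
  then show ?thesis using sub unfolding flat_def by blast
qed

lemma reg_main: assumes A: "flat X LL A" and a: "a \<in> A" and b: "b \<in> X" "b \<notin> A"
  shows "hull X LL (A \<union> {b}) = RR A (ln a b)"
proof
  have AX: "A \<subseteq> X" using A unfolding flat_def by blast
  have aX: "a \<in> X" using a AX by blast
  show "hull X LL (A \<union> {b}) \<subseteq> RR A (ln a b)"
  proof (rule hull_min[OF RA_flat[OF A a b]])
    show "A \<union> {b} \<subseteq> RR A (ln a b)"
    proof
      fix x assume "x \<in> A \<union> {b}"
      then show "x \<in> RR A (ln a b)"
      proof
        assume xA: "x \<in> A"
        have "x \<in> ln x a" using ln_left[OF _ aX] xA AX by blast
        then show ?thesis using RRI[OF ln_left[OF aX b(1)] xA] by simp
      next
        assume "x \<in> {b}"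
        then have "x = b" by simp
        then show ?thesis using RRI[OF ln_right[OF aX b(1)] a ln_right[OF aX b(1)]] by simp
      qed
    qed
  qed
  show "RR A (ln a b) \<subseteq> hull X LL (A \<union> {b})"
  proof
    fix s assume "s \<in> RR A (ln a b)"
    then obtain y c where yc: "y \<in> ln a b" "c \<in> A" "s \<in> ln c y" unfolding RR_def by blast
    have S: "A \<union> {b} \<subseteq> X" using AX b(1) by blast
    have H: "flat X LL (hull X LL (A \<union> {b}))" using hull_flat[OF S] .
    have aH: "a \<in> hull X LL (A \<union> {b})" using hull_sub a by blast
    have bH: "b \<in> hull X LL (A \<union> {b})" using hull_sub by blast
    have cH: "c \<in> hull X LL (A \<union> {b})" using hull_sub yc(2) by blast
    have yH: "y \<in> hull X LL (A \<union> {b})" using flat_ln[OF H aH bH] yc(1) by blast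
    show "s \<in> hull X LL (A \<union> {b})" using flat_ln[OF H cH yH] yc(3) by blast
  qed
qed

lemma is_regular: "regular X LL"
  unfolding regular_def
proof (intro allI impI)
  fix A a b assume h: "flat X LL A \<and> a \<in> A \<and> b \<in> X - A"
  have "(\<Union>y\<in>ln a b. cone LL A y) = RR A (ln a b)" unfolding cone_def RR_def by blast
  then show "hull X LL (A \<union> {b}) = (\<Union>y\<in>ln a b. cone LL A y)" using reg_main h by auto
qed

lemma plane_isPl: assumes P: "plane X LL P" and L: "L \<in> LL" "L \<subseteq> P" and x: "x \<in> P" "x \<notin> L"
  shows "isPl P"
proof -
  have PF: "flat X LL P" using P unfolding plane_def by blast
  have rk: "has_rank X LL P 3" using P unfolding plane_def by blast
  obtain B where B: "B \<subseteq> X" "finite B" "card B = 3" "P \<subseteq> hull X LL B"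
    using rk unfolding has_rank_def by blast
  have minr: "\<And>B'. B' \<subseteq> X \<Longrightarrow> finite B' \<Longrightarrow> P \<subseteq> hull X LL B' \<Longrightarrow> 3 \<le> card B'"
    using rk unfolding has_rank_def by blast
  obtain b1 b2 b3 where bb: "B = {b1,b2,b3}" "b1 \<noteq> b2" "b2 \<noteq> b3" "b1 \<noteq> b3"
    using B(3) unfolding card_3_iff by blast
  have b1X: "b1 \<in> X" using B(1) bb(1) by blast
  have b2X: "b2 \<in> X" using B(1) bb(1) by blast
  have b3X: "b3 \<in> X" using B(1) bb(1) by blast
  have b3n: "b3 \<notin> ln b1 b2"
  proof
    assume b3: "b3 \<in> ln b1 b2"
    have "B \<subseteq> ln b1 b2" using bb(1) b3 ln_left[OF b1X b2X] ln_right[OF b1X b2X] by blast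
    then have h1: "hull X LL B \<subseteq> ln b1 b2" using hull_min[OF flat_line[OF b1X b2X]] by blast
    have S2: "{b1, b2} \<subseteq> X" using b1X b2X by blast
    have "ln b1 b2 \<subseteq> hull X LL {b1, b2}"
      using flat_ln[OF hull_flat[OF S2]] hull_sub[of "{b1,b2}"] by blast
    then have "P \<subseteq> hull X LL {b1, b2}" using h1 B(4) by blast
    then have "3 \<le> card {b1, b2}" using minr[OF S2] by simp
    then show False using bb(2) by simp
  qed
  define H where "H = pl (ln b1 b2) (ln b1 b3)"
  have HP: "isPl H" using plane3(2)[OF b1X b2X b3X bb(2) b3n] H_def by simp
  have bH: "B \<subseteq> H" using plane3(3-5)[OF b1X b2X b3X bb(2) b3n] H_def bb(1) by blast
  have PH: "P \<subseteq> H" using hull_min[OF isPl_flat[OF HP] bH] B(4) by blast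
  obtain l1 where l1: "l1 \<in> L" using other_pt[OF L(1)] by blast
  obtain l2 where l2: "l2 \<in> L" "l2 \<noteq> l1" using other_pt[OF L(1)] by blast
  have l1X: "l1 \<in> X" using memX[OF L(1) l1] .
  have l2X: "l2 \<in> X" using memX[OF L(1) l2(1)] .
  have xX: "x \<in> X" using x(1) PF unfolding flat_def by blast
  have l12: "l1 \<noteq> l2" using l2(2) by simp
  have Leq: "ln l1 l2 = L" using ln_eq[OF L(1) l1 l2(1) l12] .
  have xl: "x \<notin> ln l1 l2" using Leq x(2) by simp
  define Q where "Q = pl (ln l1 l2) (ln l1 x)"
  have QP: "isPl Q" using plane3(2)[OF l1X l2X xX l12 xl] Q_def by simp
  have l1Q: "l1 \<in> Q" using plane3(3)[OF l1X l2X xX l12 xl] Q_def by simp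
  have l2Q: "l2 \<in> Q" using plane3(4)[OF l1X l2X xX l12 xl] Q_def by simp
  have xQ: "x \<in> Q" using plane3(5)[OF l1X l2X xX l12 xl] Q_def by simp
  have l1P: "l1 \<in> P" using L(2) l1 by blast
  have l2P: "l2 \<in> P" using L(2) l2(1) by blast
  have QsubP: "Q \<subseteq> P" using pl_in_flat[OF PF flat_ln[OF PF l1P l2P] flat_ln[OF PF l1P x(1)]] Q_def by simp
  have "Q = H" using plane_eq[OF QP HP l1Q _ l2Q _ xQ _ l12 xl] PH l1P l2P x(1) by blast
  then have "P = Q" using PH QsubP by blast
  then show "isPl P" using QP by simp
qed

lemma is_playfair: "playfair X LL"
  unfolding playfair_def
proof (intro allI impI)
  fix P L x assume h: "plane X LL P \<and> L \<in> LL \<and> L \<subseteq> P \<and> x \<in> P - L"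
  have hP: "plane X LL P" and hL: "L \<in> LL" and hLP: "L \<subseteq> P" and hx: "x \<in> P" and hxL: "x \<notin> L"
    using h by auto
  have P: "isPl P" using plane_isPl[OF hP hL hLP hx hxL] .
  obtain Lam where Lam: "Lam \<in> LL" "x \<in> Lam" "Lam \<subseteq> P" "Lam \<inter> L = {}"
    using PFex[OF P hL hLP hx hxL] by blast
  show "\<exists>!Lam. Lam \<in> LL \<and> x \<in> Lam \<and> Lam \<subseteq> P - L"
  proof (rule ex1I[of _ Lam])
    show "Lam \<in> LL \<and> x \<in> Lam \<and> Lam \<subseteq> P - L" using Lam by blast
    fix Lam' assume h': "Lam' \<in> LL \<and> x \<in> Lam' \<and> Lam' \<subseteq> P - L"
    have a: "Lam' \<in> LL" "x \<in> Lam'" "Lam' \<subseteq> P" "Lam' \<inter> L = {}" using h' by auto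
    show "Lam' = Lam" using PFuniq[OF P hL hLP hxL a Lam] .
  qed
qed

end

theorem main_thm:
  fixes X :: "'a set" and LL :: "'a set set"
  assumes "liner X LL" and "four_long LL" and "affine_liner X LL"
  shows "playfair X LL \<and> regular X LL"
proof -
  interpret AL X LL by (rule AL.intro[OF assms])
  show ?thesis using is_playfair is_regular by blast
qed


theorem theorem4p1p1:
  fixes X :: "'a set" and \<L> :: "'a set set"
  assumes "liner X \<L>" and "four_long \<L>" and "affine_liner X \<L>"
  shows "playfair X \<L> \<and> regular X \<L>"
  using main_thm[OF assms] .

end
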